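(* Let $q(\mathbf{x}_{0:N})$ be a probability density on $(\mathbb{R}^d)^{N+1}$ with finite second moments, and let $p(\mathbf{x}_{0:N})=p(\mathbf{x}_N)\prod_{n=1}^Np(\mathbf{x}_{n-1}|\mathbf{x}_n)$ be a Markov chain with a fixed $p(\mathbf{x}_N)$ and $p(\mathbf{x}_{n-1}|\mathbf{x}_n)=\mathcal{N}(\mathbf{x}_{n-1}|\boldsymbol{\mu}_n(\mathbf{x}_n),\sigma_n^2\mathbf{I})$. Then the problem $\min_{\{\boldsymbol{\mu}_n,\sigma_n^2\}_{n=1}^N}D_{\mathrm{KL}}(q(\mathbf{x}_{0:N})\|p(\mathbf{x}_{0:N}))$ has an optimal solution $$\boldsymbol{\mu}_n^*(\mathbf{x}_n)=\mathbb{E}_{q(\mathbf{x}_{n-1}|\mathbf{x}_n)}[\mathbf{x}_{n-1}],\qquad\sigma_n^{*2}=\mathbb{E}_{q_n(\mathbf{x}_n)}\frac{\mathrm{tr}(\mathrm{Cov}_{q(\mathbf{x}_{n-1}|\mathbf{x}_n)}[\mathbf{x}_{n-1}])}{d},$$ where $q_n$ is the marginal of $\mathbf{x}_n$, and the corresponding optimal value is $$D_{\mathrm{KL}}(q(\mathbf{x}_{0:N})\|p^*(\mathbf{x}_{0:N}))=H(q(\mathbf{x}_N),p(\mathbf{x}_N))+\frac d2\sum_{n=1}^N\log(2\pi e\sigma_n^{*2})-H(q(\mathbf{x}_{0:N})),$$ where $H(\cdot,\cdot)$ is cross-entropy, $H(\cdot)$ is entropy, and $p^*$ is $p$ with $\boldsymbol{\mu}_n=\boldsymbol{\mu}_n^*$,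 $\sigma_n^2=\sigma_n^{*2}$. *)

theory Defs
  imports "HOL-Probability.Probability"
begin

text \<open>Points of (R^d)^(N+1) are functions x :: nat => 'a with index set {0..N};
  the reference measure is the product Lebesgue measure.\<close>

definition path_space :: "nat \<Rightarrow> (nat \<Rightarrow> 'a::euclidean_space) measure" where
  "path_space N = PiM {0..N} (\<lambda>_. lborel)"

definition eint :: "'b measure \<Rightarrow> ('b \<Rightarrow> ereal) \<Rightarrow> ereal" where
  "eint M f = enn2ereal (\<integral>\<^sup>+ x. e2ennreal (f x) \<partial>M) - enn2ereal (\<integral>\<^sup>+ x. e2ennreal (- f x) \<partial>M)"

definition KL_dens :: "'b measure \<Rightarrow> ('b \<Rightarrow> real) \<Rightarrow> ('b \<Rightarrow> real) \<Rightarrow> ereal" where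
  "KL_dens M q p = eint M (\<lambda>x. if q x \<le> 0 then 0 else if p x \<le> 0 then \<infinity>
                                 else ereal (q x * ln (q x / p x)))"

definition cross_entropy_dens :: "'b measure \<Rightarrow> ('b \<Rightarrow> real) \<Rightarrow> ('b \<Rightarrow> real) \<Rightarrow> ereal" where
  "cross_entropy_dens M q p = eint M (\<lambda>x. if q x \<le> 0 then 0 else if p x \<le> 0 then \<infinity>
                                 else ereal (- q x * ln (p x)))"

definition entropy_dens :: "'b measure \<Rightarrow> ('b \<Rightarrow> real) \<Rightarrow> real" where
  "entropy_dens M q = - (\<integral> x. q x * ln (q x) \<partial>M)"

definition marg1 :: "nat \<Rightarrow> ((nat \<Rightarrow> 'a::euclidean_space) \<Rightarrow> real) \<Rightarrow> nat \<Rightarrow> 'a \<Rightarrow> real" where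
  "marg1 N q n b = (\<integral> x. q (x(n := b)) \<partial>(PiM ({0..N} - {n}) (\<lambda>_. lborel)))"

definition marg2 :: "nat \<Rightarrow> ((nat \<Rightarrow> 'a::euclidean_space) \<Rightarrow> real) \<Rightarrow> nat \<Rightarrow> 'a \<Rightarrow> 'a \<Rightarrow> real" where
  "marg2 N q n a b = (\<integral> x. q (x(n - 1 := a, n := b)) \<partial>(PiM ({0..N} - {n - 1, n}) (\<lambda>_. lborel)))"

definition cond_dens :: "nat \<Rightarrow> ((nat \<Rightarrow> 'a::euclidean_space) \<Rightarrow> real) \<Rightarrow> nat \<Rightarrow> 'a \<Rightarrow> 'a \<Rightarrow> real" where
  "cond_dens N q n a b = marg2 N q n a b / marg1 N q n b"

definition opt_mean :: "nat \<Rightarrow> ((nat \<Rightarrow> real^'d) \<Rightarrow> real) \<Rightarrow> nat \<Rightarrow> real^'d \<Rightarrow> real^'d" where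
  "opt_mean N q n b = (\<integral> a. cond_dens N q n a b *\<^sub>R a \<partial>lborel)"

definition cond_trace_cov :: "nat \<Rightarrow> ((nat \<Rightarrow> real^'d) \<Rightarrow> real) \<Rightarrow> nat \<Rightarrow> real^'d \<Rightarrow> real" where
  "cond_trace_cov N q n b =
     (\<Sum>i\<in>UNIV. \<integral> a. cond_dens N q n a b * (a $ i - opt_mean N q n b $ i)\<^sup>2 \<partial>lborel)"

definition opt_var :: "nat \<Rightarrow> ((nat \<Rightarrow> real^'d) \<Rightarrow> real) \<Rightarrow> nat \<Rightarrow> real" where
  "opt_var N q n = (\<integral> b. marg1 N q n b * (cond_trace_cov N q n b / real CARD('d)) \<partial>lborel)"

definition gauss_iso :: "real^'d \<Rightarrow> real \<Rightarrow> real^'d \<Rightarrow> real" where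
  "gauss_iso m s y = (\<Prod>i\<in>UNIV. normal_density (m $ i) (sqrt s) (y $ i))"

definition chain_dens :: "nat \<Rightarrow> (real^'d \<Rightarrow> real) \<Rightarrow> (nat \<Rightarrow> real^'d \<Rightarrow> real^'d) \<Rightarrow> (nat \<Rightarrow> real)
    \<Rightarrow> (nat \<Rightarrow> real^'d) \<Rightarrow> real" where
  "chain_dens N pN \<mu> s x = pN (x N) * (\<Prod>n\<in>{1..N}. gauss_iso (\<mu> n (x n)) (s n) (x (n - 1)))"

end

theory Submission
  imports Defs
begin

lemma psf_lborel: "product_sigma_finite (\<lambda>_. lborel :: ('a::euclidean_space) measure)"
  by (simp add: lborel.sigma_finite_measure_axioms product_sigma_finite_def)

lemma sf_PiM: "finite I \<Longrightarrow> sigma_finite_measure (PiM I (\<lambda>_. lborel :: ('a::euclidean_space) measure))"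
proof -
  assume "finite I"
  interpret finite_product_sigma_finite "\<lambda>_. lborel :: 'a measure" I
    by (simp add: \<open>finite I\<close> finite_product_sigma_finite.intro finite_product_sigma_finite_axioms.intro psf_lborel)
  show ?thesis by (rule sigma_finite_measure_axioms)
qed

lemma ins_rev:
  fixes G :: "(nat \<Rightarrow> 'a::euclidean_space) \<Rightarrow> ennreal"
  assumes "finite J" "i \<notin> J" "G \<in> borel_measurable (PiM (insert i J) (\<lambda>_. lborel))"
  shows "(\<integral>\<^sup>+x. G x \<partial>PiM (insert i J) (\<lambda>_. lborel)) =
     (\<integral>\<^sup>+ y. \<integral>\<^sup>+ x. G (x(i:=y)) \<partial>PiM J (\<lambda>_. lborel) \<partial>lborel)"
  using product_sigma_finite.product_nn_integral_insert_rev[OF psf_lborel assms] .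


lemma space_lb_PiM: "space (PiM I (\<lambda>_. lborel)) = (PiE I (\<lambda>_. UNIV))"
  by (simp add: space_PiM)

lemma upd_in_space: "x \<in> space (PiM J (\<lambda>_. lborel)) \<Longrightarrow> x(i := y) \<in> space (PiM (insert i J) (\<lambda>_. lborel))"
  by (auto simp: space_PiM PiE_iff extensional_def)

locale qs =
  fixes N :: nat and q :: "(nat \<Rightarrow> real^'d) \<Rightarrow> real"
  assumes q_meas: "q \<in> borel_measurable (path_space N)"
  and q_nonneg: "\<And>x. x \<in> space (path_space N) \<Longrightarrow> q x \<ge> 0"
  and q_prob: "(\<integral>\<^sup>+ x. ennreal (q x) \<partial>path_space N) = 1"
  and q_moments: "\<And>n. n \<le> N \<Longrightarrow> integrable (path_space N) (\<lambda>x. q x * (norm (x n))\<^sup>2)"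
begin

abbreviation "Om \<equiv> path_space N :: (nat \<Rightarrow> real^'d) measure"

lemma ins_N: "n \<le> N \<Longrightarrow> {0..N} = insert n ({0..N} - {n})" by auto

lemma ins_N2: "1 \<le> n \<Longrightarrow> n \<le> N \<Longrightarrow> {0..N} - {n} = insert (n - 1) ({0..N} - {n - 1, n})" by auto

lemma q_meas': "q \<in> borel_measurable (PiM {0..N} (\<lambda>_. lborel))"
  using q_meas by (simp add: path_space_def)

lemma meas_upd1:
  assumes "n \<le> N"
  shows "(\<lambda>(b, x). x(n := b)) \<in> measurable (lborel \<Otimes>\<^sub>M PiM ({0..N} - {n}) (\<lambda>_. lborel)) (PiM {0..N} (\<lambda>_. lborel :: (real^'d) measure))"
proof -
  have "(\<lambda>p. (snd p)(n := fst p)) \<in> measurable (lborel \<Otimes>\<^sub>M PiM ({0..N} - {n}) (\<lambda>_. lborel)) (PiM {0..N} (\<lambda>_. lborel :: (real^'d) measure))"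
    by (rule measurable_fun_upd[where J = "{0..N} - {n}"]) (use assms in auto)
  then show ?thesis by (simp add: case_prod_beta')
qed

lemma meas_upd2:
  assumes "1 \<le> n" "n \<le> N"
  shows "(\<lambda>(ab, x). x(n - 1 := fst ab, n := snd ab)) \<in> measurable ((lborel \<Otimes>\<^sub>M lborel) \<Otimes>\<^sub>M PiM ({0..N} - {n - 1, n}) (\<lambda>_. lborel)) (PiM {0..N} (\<lambda>_. lborel :: (real^'d) measure))"
proof -
  have 1: "(\<lambda>p. (snd p)(n - 1 := fst (fst p))) \<in> measurable ((lborel \<Otimes>\<^sub>M lborel) \<Otimes>\<^sub>M PiM ({0..N} - {n - 1, n}) (\<lambda>_. lborel)) (PiM ({0..N} - {n}) (\<lambda>_. lborel :: (real^'d) measure))"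
    by (rule measurable_fun_upd[where J = "{0..N} - {n - 1, n}"]) (use assms in auto)
  have "(\<lambda>p. ((snd p)(n - 1 := fst (fst p)))(n := snd (fst p))) \<in> measurable ((lborel \<Otimes>\<^sub>M lborel) \<Otimes>\<^sub>M PiM ({0..N} - {n - 1, n}) (\<lambda>_. lborel)) (PiM {0..N} (\<lambda>_. lborel :: (real^'d) measure))"
    by (rule measurable_fun_upd[where J = "{0..N} - {n}", OF _ 1]) (use assms in auto)
  then show ?thesis by (simp add: case_prod_beta')
qed

lemma q_upd1_meas:
  assumes "n \<le> N"
  shows "(\<lambda>(b, x). q (x(n := b))) \<in> borel_measurable (lborel \<Otimes>\<^sub>M PiM ({0..N} - {n}) (\<lambda>_. lborel))"
  using measurable_comp[OF meas_upd1[OF assms] q_meas'] by (simp add: comp_def case_prod_beta')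

lemma q_upd2_meas:
  assumes "1 \<le> n" "n \<le> N"
  shows "(\<lambda>(ab, x). q (x(n - 1 := fst ab, n := snd ab))) \<in> borel_measurable ((lborel \<Otimes>\<^sub>M lborel) \<Otimes>\<^sub>M PiM ({0..N} - {n - 1, n}) (\<lambda>_. lborel))"
  using measurable_comp[OF meas_upd2[OF assms] q_meas'] by (simp add: comp_def case_prod_beta')

definition Q1 :: "nat \<Rightarrow> real^'d \<Rightarrow> ennreal" where
  "Q1 n b = (\<integral>\<^sup>+ x. ennreal (q (x(n := b))) \<partial>PiM ({0..N} - {n}) (\<lambda>_. lborel))"

definition Q2 :: "nat \<Rightarrow> real^'d \<Rightarrow> real^'d \<Rightarrow> ennreal" where
  "Q2 n a b = (\<integral>\<^sup>+ x. ennreal (q (x(n - 1 := a, n := b))) \<partial>PiM ({0..N} - {n - 1, n}) (\<lambda>_. lborel))"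

lemma nn_marg1:
  assumes n: "n \<le> N" and Phi: "Phi \<in> borel_measurable lborel"
  shows "(\<integral>\<^sup>+ x. ennreal (q x) * Phi (x n) \<partial>Om) = (\<integral>\<^sup>+ b. Q1 n b * Phi b \<partial>lborel)"
proof -
  have m: "(\<lambda>x. ennreal (q x) * Phi (x n)) \<in> borel_measurable (PiM (insert n ({0..N} - {n})) (\<lambda>_. lborel :: (real^'d) measure))"
    unfolding ins_N[OF n, symmetric]
  proof (intro borel_measurable_times_ennreal)
    show "(\<lambda>x. ennreal (q x)) \<in> borel_measurable (PiM {0..N} (\<lambda>_. lborel))" using q_meas' by measurable
    show "(\<lambda>x. Phi (x n)) \<in> borel_measurable (PiM {0..N} (\<lambda>_. lborel))"
      by (rule measurable_compose[OF measurable_component_singleton[where M="\<lambda>_. lborel" and i=n and I="{0..N}"] Phi]) (use n in auto)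
  qed
  have "(\<integral>\<^sup>+ x. ennreal (q x) * Phi (x n) \<partial>Om) = (\<integral>\<^sup>+ x. ennreal (q x) * Phi (x n) \<partial>PiM (insert n ({0..N} - {n})) (\<lambda>_. lborel))"
    by (simp only: path_space_def ins_N[OF n, symmetric])
  also have "\<dots> = (\<integral>\<^sup>+ b. \<integral>\<^sup>+ x. ennreal (q (x(n := b))) * Phi b \<partial>PiM ({0..N} - {n}) (\<lambda>_. lborel) \<partial>lborel)"
    by (subst ins_rev[OF _ _ m]) auto
  also have "\<dots> = (\<integral>\<^sup>+ b. Q1 n b * Phi b \<partial>lborel)"
    unfolding Q1_def by (rule nn_integral_cong, rule nn_integral_multc) (use q_upd1_meas[OF n] in measurable)
  finally show ?thesis .
qed

lemma meas_upd_const: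
  assumes "n \<le> N"
  shows "(\<lambda>x. x(n := b)) \<in> measurable (PiM ({0..N} - {n}) (\<lambda>_. lborel)) (PiM {0..N} (\<lambda>_. lborel :: (real^'d) measure))"
  by (rule measurable_fun_upd[where J = "{0..N} - {n}"]) (use assms in auto)

lemma q_upd2c_meas:
  assumes n: "1 \<le> n" "n \<le> N"
  shows "(\<lambda>x. q (x(n - 1 := a, n := b))) \<in> borel_measurable (PiM ({0..N} - {n - 1, n}) (\<lambda>_. lborel))"
proof -
  have 1: "(\<lambda>x. x(n - 1 := a)) \<in> measurable (PiM ({0..N} - {n - 1, n}) (\<lambda>_. lborel)) (PiM ({0..N} - {n}) (\<lambda>_. lborel :: (real^'d) measure))"
    by (rule measurable_fun_upd[where J = "{0..N} - {n - 1, n}"]) (use n in auto)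
  have "(\<lambda>x. (x(n - 1 := a))(n := b)) \<in> measurable (PiM ({0..N} - {n - 1, n}) (\<lambda>_. lborel)) (PiM {0..N} (\<lambda>_. lborel :: (real^'d) measure))"
    by (rule measurable_fun_upd[where J = "{0..N} - {n}", OF _ 1]) (use n in auto)
  from measurable_comp[OF this q_meas'] show ?thesis by (simp add: comp_def)
qed

lemma ins1:
  assumes n: "n \<le> N" and G: "G \<in> borel_measurable (PiM {0..N} (\<lambda>_. lborel :: (real^'d) measure))"
  shows "(\<integral>\<^sup>+ x. G x \<partial>Om) = (\<integral>\<^sup>+ b. \<integral>\<^sup>+ x. G (x(n := b)) \<partial>PiM ({0..N} - {n}) (\<lambda>_. lborel) \<partial>lborel)"
proof -
  have m: "G \<in> borel_measurable (PiM (insert n ({0..N} - {n})) (\<lambda>_. lborel :: (real^'d) measure))"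
    using G by (simp only: ins_N[OF n, symmetric])
  have "(\<integral>\<^sup>+ x. G x \<partial>Om) = (\<integral>\<^sup>+ x. G x \<partial>PiM (insert n ({0..N} - {n})) (\<lambda>_. lborel))"
    by (simp only: path_space_def ins_N[OF n, symmetric])
  also have "\<dots> = (\<integral>\<^sup>+ b. \<integral>\<^sup>+ x. G (x(n := b)) \<partial>PiM ({0..N} - {n}) (\<lambda>_. lborel) \<partial>lborel)"
    by (subst ins_rev[OF _ _ m]) auto
  finally show ?thesis .
qed

lemma ins2:
  assumes n: "1 \<le> n" "n \<le> N" and G: "G \<in> borel_measurable (PiM {0..N} (\<lambda>_. lborel :: (real^'d) measure))"
  shows "(\<integral>\<^sup>+ x. G x \<partial>Om) = (\<integral>\<^sup>+ b. \<integral>\<^sup>+ a. \<integral>\<^sup>+ x. G (x(n - 1 := a, n := b)) \<partial>PiM ({0..N} - {n - 1, n}) (\<lambda>_. lborel) \<partial>lborel \<partial>lborel)"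
proof -
  have "(\<integral>\<^sup>+ x. G x \<partial>Om) = (\<integral>\<^sup>+ b. \<integral>\<^sup>+ x. G (x(n := b)) \<partial>PiM ({0..N} - {n}) (\<lambda>_. lborel) \<partial>lborel)"
    by (rule ins1[OF n(2) G])
  also have "\<dots> = (\<integral>\<^sup>+ b. \<integral>\<^sup>+ a. \<integral>\<^sup>+ x. G (x(n - 1 := a, n := b)) \<partial>PiM ({0..N} - {n - 1, n}) (\<lambda>_. lborel) \<partial>lborel \<partial>lborel)"
  proof (rule nn_integral_cong)
    fix b :: "real^'d"
    have m: "(\<lambda>x. G (x(n := b))) \<in> borel_measurable (PiM (insert (n - 1) ({0..N} - {n - 1, n})) (\<lambda>_. lborel :: (real^'d) measure))"
      unfolding ins_N2[OF n, symmetric] using measurable_comp[OF meas_upd_const[OF n(2)] G] by (simp add: comp_def)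
    have "(\<integral>\<^sup>+ x. G (x(n := b)) \<partial>PiM ({0..N} - {n}) (\<lambda>_. lborel)) = (\<integral>\<^sup>+ x. G (x(n := b)) \<partial>PiM (insert (n - 1) ({0..N} - {n - 1, n})) (\<lambda>_. lborel))"
      by (simp only: ins_N2[OF n, symmetric])
    also have "\<dots> = (\<integral>\<^sup>+ a. \<integral>\<^sup>+ x. G (x(n - 1 := a, n := b)) \<partial>PiM ({0..N} - {n - 1, n}) (\<lambda>_. lborel) \<partial>lborel)"
      by (subst ins_rev[OF _ _ m]) auto
    finally show "(\<integral>\<^sup>+ x. G (x(n := b)) \<partial>PiM ({0..N} - {n}) (\<lambda>_. lborel)) = \<dots>" .
  qed
  finally show ?thesis .
qed

lemma Q1_Q2:
  assumes n: "1 \<le> n" "n \<le> N"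
  shows "Q1 n b = (\<integral>\<^sup>+ a. Q2 n a b \<partial>lborel)"
proof -
  have m: "(\<lambda>x. ennreal (q (x(n := b)))) \<in> borel_measurable (PiM (insert (n - 1) ({0..N} - {n - 1, n})) (\<lambda>_. lborel :: (real^'d) measure))"
    unfolding ins_N2[OF n, symmetric] using measurable_comp[OF meas_upd_const[OF n(2)] q_meas'] by (simp add: comp_def)
  have "Q1 n b = (\<integral>\<^sup>+ x. ennreal (q (x(n := b))) \<partial>PiM (insert (n - 1) ({0..N} - {n - 1, n})) (\<lambda>_. lborel))"
    unfolding Q1_def by (simp only: ins_N2[OF n, symmetric])
  also have "\<dots> = (\<integral>\<^sup>+ a. Q2 n a b \<partial>lborel)"
    unfolding Q2_def by (subst ins_rev[OF _ _ m]) auto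
  finally show ?thesis .
qed

lemma nn_marg2:
  assumes n: "1 \<le> n" "n \<le> N" and Psi: "case_prod Psi \<in> borel_measurable (lborel \<Otimes>\<^sub>M lborel)"
  shows "(\<integral>\<^sup>+ x. ennreal (q x) * Psi (x (n - 1)) (x n) \<partial>Om) = (\<integral>\<^sup>+ b. \<integral>\<^sup>+ a. Q2 n a b * Psi a b \<partial>lborel \<partial>lborel)"
proof -
  have G: "(\<lambda>x. ennreal (q x) * Psi (x (n - 1)) (x n)) \<in> borel_measurable (PiM {0..N} (\<lambda>_. lborel :: (real^'d) measure))"
  proof (intro borel_measurable_times_ennreal)
    show "(\<lambda>x. ennreal (q x)) \<in> borel_measurable (PiM {0..N} (\<lambda>_. lborel))" using q_meas' by measurable
    have "(\<lambda>x. (x (n - 1), x n)) \<in> measurable (PiM {0..N} (\<lambda>_. lborel)) (lborel \<Otimes>\<^sub>M (lborel :: (real^'d) measure))"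
      by (intro measurable_Pair measurable_component_singleton[where M="\<lambda>_. lborel"]) (use n in auto)
    from measurable_comp[OF this Psi]
    show "(\<lambda>x. Psi (x (n - 1)) (x n)) \<in> borel_measurable (PiM {0..N} (\<lambda>_. lborel))" by (simp add: comp_def)
  qed
  have ne: "n - 1 \<noteq> n" using n by auto
  show ?thesis
    unfolding ins2[OF n G] Q2_def
  proof (intro nn_integral_cong)
    fix a b :: "real^'d"
    have e: "\<And>x::nat \<Rightarrow> real^'d. (x(n - 1 := a, n := b)) (n - 1) = a" "\<And>x::nat \<Rightarrow> real^'d. (x(n - 1 := a, n := b)) n = b"
      using ne by auto
    show "(\<integral>\<^sup>+ x. ennreal (q (x(n - 1 := a, n := b))) * Psi ((x(n - 1 := a, n := b)) (n - 1)) ((x(n - 1 := a, n := b)) n) \<partial>PiM ({0..N} - {n - 1, n}) (\<lambda>_. lborel))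
       = (\<integral>\<^sup>+ x. ennreal (q (x(n - 1 := a, n := b))) \<partial>PiM ({0..N} - {n - 1, n}) (\<lambda>_. lborel)) * Psi a b"
      unfolding e by (rule nn_integral_multc) (use q_upd2c_meas[OF n] in measurable)
  qed
qed

end

lemma nn_fin_int:
  fixes f :: "'a \<Rightarrow> real"
  assumes f: "f \<in> borel_measurable M" and nn: "AE x in M. 0 \<le> f x" and fin: "(\<integral>\<^sup>+x. ennreal (f x) \<partial>M) \<noteq> \<infinity>"
  shows "integrable M f" "ennreal (integral\<^sup>L M f) = (\<integral>\<^sup>+x. ennreal (f x) \<partial>M)"
proof -
  obtain r where r: "(\<integral>\<^sup>+x. ennreal (f x) \<partial>M) = ennreal r" using fin by (cases "(\<integral>\<^sup>+x. ennreal (f x) \<partial>M)") auto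
  show i: "integrable M f" by (rule integrableI_nn_integral_finite[OF f nn r])
  show "ennreal (integral\<^sup>L M f) = (\<integral>\<^sup>+x. ennreal (f x) \<partial>M)"
    using nn_integral_eq_integral[OF i nn] by simp
qed

context qs begin

lemma sfR: "sigma_finite_measure (PiM R (\<lambda>_. lborel :: (real^'d) measure))" if "R \<subseteq> {0..N}"
  by (rule sf_PiM) (use that finite_subset in blast)

lemma q_nonneg_upd1:
  assumes "n \<le> N" "x \<in> space (PiM ({0..N} - {n}) (\<lambda>_. lborel))"
  shows "q (x(n := b)) \<ge> 0"
proof -
  have "x(n := b) \<in> space (PiM (insert n ({0..N} - {n})) (\<lambda>_. lborel :: (real^'d) measure))"
    by (rule upd_in_space[OF assms(2)])
  then have "x(n := b) \<in> space Om" by (simp only: path_space_def ins_N[OF assms(1), symmetric])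
  then show ?thesis by (rule q_nonneg)
qed

lemma q_nonneg_upd2:
  assumes "1 \<le> n" "n \<le> N" "x \<in> space (PiM ({0..N} - {n - 1, n}) (\<lambda>_. lborel))"
  shows "q (x(n - 1 := a, n := b)) \<ge> 0"
proof -
  have "x(n - 1 := a) \<in> space (PiM (insert (n - 1) ({0..N} - {n - 1, n})) (\<lambda>_. lborel :: (real^'d) measure))"
    by (rule upd_in_space[OF assms(3)])
  then have "x(n - 1 := a) \<in> space (PiM ({0..N} - {n}) (\<lambda>_. lborel :: (real^'d) measure))"
    by (simp only: ins_N2[OF assms(1,2), symmetric])
  then show ?thesis using q_nonneg_upd1[OF assms(2)] by simp
qed

lemma marg1_nonneg: "n \<le> N \<Longrightarrow> marg1 N q n b \<ge> 0"
  unfolding marg1_def by (rule integral_nonneg_AE) (auto intro!: AE_I2 q_nonneg_upd1)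

lemma marg2_nonneg: "1 \<le> n \<Longrightarrow> n \<le> N \<Longrightarrow> marg2 N q n a b \<ge> 0"
  unfolding marg2_def by (rule integral_nonneg_AE, rule AE_I2, rule q_nonneg_upd2) auto

lemma Q1_meas: "n \<le> N \<Longrightarrow> Q1 n \<in> borel_measurable lborel"
  unfolding Q1_def[abs_def]
  by (rule sigma_finite_measure.borel_measurable_nn_integral[OF sfR]) (use q_upd1_meas in auto)

lemma marg1_meas: "n \<le> N \<Longrightarrow> marg1 N q n \<in> borel_measurable lborel"
  unfolding marg1_def
  by (rule sigma_finite_measure.borel_measurable_lebesgue_integral[OF sfR]) (use q_upd1_meas in auto)

lemma marg2_meas: "1 \<le> n \<Longrightarrow> n \<le> N \<Longrightarrow> (\<lambda>ab. marg2 N q n (fst ab) (snd ab)) \<in> borel_measurable (lborel \<Otimes>\<^sub>M lborel)"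
  unfolding marg2_def
  by (rule sigma_finite_measure.borel_measurable_lebesgue_integral[OF sfR]) (use q_upd2_meas in auto)

lemma Q2_meas: "1 \<le> n \<Longrightarrow> n \<le> N \<Longrightarrow> (\<lambda>ab. Q2 n (fst ab) (snd ab)) \<in> borel_measurable (lborel \<Otimes>\<^sub>M lborel)"
  unfolding Q2_def[abs_def]
  by (rule sigma_finite_measure.borel_measurable_nn_integral[OF sfR]) (use q_upd2_meas in auto)

lemma Q1_int: "n \<le> N \<Longrightarrow> (\<integral>\<^sup>+ b. Q1 n b \<partial>lborel) = 1"
  using nn_marg1[of n "\<lambda>_. 1"] q_prob by simp

lemma Q1_fin: assumes "n \<le> N" shows "AE b in lborel. Q1 n b \<noteq> \<infinity>"
  by (rule nn_integral_PInf_AE[OF Q1_meas[OF assms]]) (simp add: Q1_int[OF assms])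

lemma Q1_marg1: assumes "n \<le> N" "Q1 n b \<noteq> \<infinity>" shows "Q1 n b = ennreal (marg1 N q n b)"
proof -
  have "ennreal (marg1 N q n b) = Q1 n b"
    unfolding marg1_def Q1_def
    by (rule nn_fin_int(2)) (use assms q_upd1_meas[OF assms(1)] q_nonneg_upd1[OF assms(1)] in \<open>auto simp: Q1_def intro!: AE_I2\<close>)
  then show ?thesis by simp
qed

lemma Q1_marg1_AE: assumes "n \<le> N" shows "AE b in lborel. Q1 n b = ennreal (marg1 N q n b)"
  using Q1_fin[OF assms] by eventually_elim (rule Q1_marg1[OF assms])

lemma marg1_int: "n \<le> N \<Longrightarrow> (\<integral>\<^sup>+ b. ennreal (marg1 N q n b) \<partial>lborel) = 1"
  using Q1_int[of n] nn_integral_cong_AE[OF Q1_marg1_AE[of n]] by simp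

end

lemma sq_expand:
  fixes m g :: "'a \<Rightarrow> real"
  assumes i0: "integrable M m" and i1: "integrable M (\<lambda>a. m a * g a)" and i2: "integrable M (\<lambda>a. m a * (g a)\<^sup>2)"
  shows "integrable M (\<lambda>a. m a * (g a - c)\<^sup>2)"
    "(\<integral> a. m a * (g a - c)\<^sup>2 \<partial>M) = (\<integral> a. m a * (g a)\<^sup>2 \<partial>M) - 2 * c * (\<integral> a. m a * g a \<partial>M) + c\<^sup>2 * (\<integral> a. m a \<partial>M)"
proof -
  have eq: "(\<lambda>a. m a * (g a - c)\<^sup>2) = (\<lambda>a. m a * (g a)\<^sup>2 - (2 * c) * (m a * g a) + c\<^sup>2 * m a)"
    by (rule ext) (simp add: power2_eq_square algebra_simps)
  show "integrable M (\<lambda>a. m a * (g a - c)\<^sup>2)" unfolding eq using i0 i1 i2 by auto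
  show "(\<integral> a. m a * (g a - c)\<^sup>2 \<partial>M) = (\<integral> a. m a * (g a)\<^sup>2 \<partial>M) - 2 * c * (\<integral> a. m a * g a \<partial>M) + c\<^sup>2 * (\<integral> a. m a \<partial>M)"
    unfolding eq using i0 i1 i2 by simp
qed

lemma norm_sq_vec: "(norm (v :: real^'d))\<^sup>2 = (\<Sum>i\<in>UNIV. (v $ i)\<^sup>2)"
  unfolding norm_vec_def L2_set_def by (simp add: sum_nonneg)

lemma coord_le_sum: "(a $ i)\<^sup>2 \<le> (\<Sum>j\<in>UNIV. (a $ j :: real)\<^sup>2)"
  by (rule member_le_sum) auto

lemma abs_le_1sq: "\<bar>x::real\<bar> \<le> 1 + x\<^sup>2"
proof -
  have "0 \<le> (\<bar>x\<bar> - 1)\<^sup>2" by simp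
  also have "(\<bar>x\<bar> - 1)\<^sup>2 = x\<^sup>2 - 2 * \<bar>x\<bar> + 1" by (simp add: power2_diff)
  finally show ?thesis by (smt (verit) zero_le_power2)
qed

lemma norm_le_1sq: "norm (a :: real^'d) \<le> 1 + (\<Sum>j\<in>UNIV. (a $ j)\<^sup>2)"
  using abs_le_1sq[of "norm a"] by (simp add: norm_sq_vec)

lemma vec_nth_meas[measurable]: "(\<lambda>x::real^'d. x $ i) \<in> borel_measurable borel"
  by (intro borel_measurable_continuous_onI linear_continuous_on bounded_linear_vec_nth)

lemma var_decomp:
  fixes m2 :: "real^'d \<Rightarrow> real" and c :: "real^'d"
  assumes nn: "\<And>a. m2 a \<ge> 0" and meas: "m2 \<in> borel_measurable lborel"
    and i0: "integrable lborel m2" and i2: "integrable lborel (\<lambda>a. m2 a * (\<Sum>i\<in>UNIV. (a $ i)\<^sup>2))"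
  defines "m1 \<equiv> \<integral> a. m2 a \<partial>lborel"
  defines "mu \<equiv> \<integral> a. (m2 a / m1) *\<^sub>R a \<partial>lborel"
  defines "T \<equiv> \<Sum>i\<in>UNIV. \<integral> a. (m2 a / m1) * (a $ i - mu $ i)\<^sup>2 \<partial>lborel"
  shows "integrable lborel (\<lambda>a. m2 a * (\<Sum>i\<in>UNIV. (a $ i - c $ i)\<^sup>2))"
    and "(\<integral> a. m2 a * (\<Sum>i\<in>UNIV. (a $ i - c $ i)\<^sup>2) \<partial>lborel) = m1 * T + m1 * (\<Sum>i\<in>UNIV. (mu $ i - c $ i)\<^sup>2)"
proof -
  have isq: "integrable lborel (\<lambda>a. m2 a * (a $ i)\<^sup>2)" for i
  proof (rule Bochner_Integration.integrable_bound[OF i2])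
    show "(\<lambda>a. m2 a * (a $ i)\<^sup>2) \<in> borel_measurable lborel" using meas by measurable
    show "AE a in lborel. norm (m2 a * (a $ i)\<^sup>2) \<le> norm (m2 a * (\<Sum>i\<in>UNIV. (a $ i)\<^sup>2))"
      using nn coord_le_sum by (auto intro!: AE_I2 mult_left_mono simp: abs_mult sum_nonneg)
  qed
  have i12: "integrable lborel (\<lambda>a. m2 a + m2 a * (\<Sum>i\<in>UNIV. (a $ i)\<^sup>2))" using i0 i2 by auto
  have ilin: "integrable lborel (\<lambda>a. m2 a * a $ i)" for i
  proof (rule Bochner_Integration.integrable_bound[OF i12])
    show "(\<lambda>a. m2 a * a $ i) \<in> borel_measurable lborel" using meas by measurable
    show "AE a in lborel. norm (m2 a * a $ i) \<le> norm (m2 a + m2 a * (\<Sum>i\<in>UNIV. (a $ i)\<^sup>2))"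
    proof (intro AE_I2)
      fix a :: "real^'d"
      have "\<bar>a $ i\<bar> \<le> 1 + (\<Sum>i\<in>UNIV. (a $ i)\<^sup>2)"
        using abs_le_1sq[of "a $ i"] coord_le_sum[of a i] by linarith
      then have "m2 a * \<bar>a $ i\<bar> \<le> m2 a * (1 + (\<Sum>i\<in>UNIV. (a $ i)\<^sup>2))" by (rule mult_left_mono) (use nn in auto)
      then show "norm (m2 a * a $ i) \<le> norm (m2 a + m2 a * (\<Sum>i\<in>UNIV. (a $ i)\<^sup>2))"
        using nn[of a] by (simp add: abs_mult algebra_simps sum_nonneg)
    qed
  qed
  have ivec: "integrable lborel (\<lambda>a. (m2 a / m1) *\<^sub>R a)"
  proof (rule Bochner_Integration.integrable_bound[OF integrable_divide[OF i12, of "\<bar>m1\<bar>"]])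
    show "(\<lambda>a. (m2 a / m1) *\<^sub>R a) \<in> borel_measurable lborel" using meas by measurable
    show "AE a in lborel. norm ((m2 a / m1) *\<^sub>R a) \<le> norm ((m2 a + m2 a * (\<Sum>i\<in>UNIV. (a $ i)\<^sup>2)) / \<bar>m1\<bar>)"
    proof (intro AE_I2)
      fix a :: "real^'d"
      have "m2 a * norm a \<le> m2 a * (1 + (\<Sum>i\<in>UNIV. (a $ i)\<^sup>2))" by (rule mult_left_mono[OF norm_le_1sq]) (use nn in auto)
      then show "norm ((m2 a / m1) *\<^sub>R a) \<le> norm ((m2 a + m2 a * (\<Sum>i\<in>UNIV. (a $ i)\<^sup>2)) / \<bar>m1\<bar>)"
        using nn[of a] by (simp add: abs_mult algebra_simps sum_nonneg divide_right_mono)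
    qed
  qed
  have mu_i: "mu $ i = (\<integral> a. m2 a * a $ i \<partial>lborel) / m1" for i
  proof -
    have "mu $ i = (\<integral> a. ((m2 a / m1) *\<^sub>R a) $ i \<partial>lborel)"
      unfolding mu_def by (rule integral_bounded_linear[OF bounded_linear_vec_nth ivec, symmetric])
    also have "\<dots> = (\<integral> a. (m2 a * a $ i) / m1 \<partial>lborel)" by simp
    also have "\<dots> = (\<integral> a. m2 a * a $ i \<partial>lborel) / m1" by (rule integral_divide_zero)
    finally show ?thesis .
  qed
  have ci: "integrable lborel (\<lambda>a. m2 a * (a $ i - c' )\<^sup>2)"
    and ce: "(\<integral> a. m2 a * (a $ i - c')\<^sup>2 \<partial>lborel) = (\<integral> a. m2 a * (a $ i)\<^sup>2 \<partial>lborel) - 2 * c' * (\<integral> a. m2 a * a $ i \<partial>lborel) + c'\<^sup>2 * m1"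
    for i c' using sq_expand[OF i0 ilin isq, of i c'] unfolding m1_def by auto
  have sum_eq: "(\<lambda>a. m2 a * (\<Sum>i\<in>UNIV. (a $ i - c $ i)\<^sup>2)) = (\<lambda>a. \<Sum>i\<in>UNIV. m2 a * (a $ i - c $ i)\<^sup>2)"
    by (simp add: sum_distrib_left)
  show "integrable lborel (\<lambda>a. m2 a * (\<Sum>i\<in>UNIV. (a $ i - c $ i)\<^sup>2))"
    unfolding sum_eq using ci by auto
  have lhs: "(\<integral> a. m2 a * (\<Sum>i\<in>UNIV. (a $ i - c $ i)\<^sup>2) \<partial>lborel) = (\<Sum>i\<in>UNIV. \<integral> a. m2 a * (a $ i - c $ i)\<^sup>2 \<partial>lborel)"
    unfolding sum_eq by (rule Bochner_Integration.integral_sum) (use ci in auto)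
  show "(\<integral> a. m2 a * (\<Sum>i\<in>UNIV. (a $ i - c $ i)\<^sup>2) \<partial>lborel) = m1 * T + m1 * (\<Sum>i\<in>UNIV. (mu $ i - c $ i)\<^sup>2)"
  proof (cases "m1 = 0")
    case True
    have "AE a in lborel. m2 a = 0"
      using integral_nonneg_eq_0_iff_AE[OF i0] True nn unfolding m1_def by auto
    then have "AE a in lborel. m2 a * (\<Sum>i\<in>UNIV. (a $ i - c $ i)\<^sup>2) = 0" by eventually_elim simp
    then have "(\<integral> a. m2 a * (\<Sum>i\<in>UNIV. (a $ i - c $ i)\<^sup>2) \<partial>lborel) = 0"
      by (rule integral_eq_zero_AE)
    then show ?thesis using True by simp
  next
    case False
    have Ti: "m1 * (\<integral> a. (m2 a / m1) * (a $ i - mu $ i)\<^sup>2 \<partial>lborel) = (\<integral> a. m2 a * (a $ i - mu $ i)\<^sup>2 \<partial>lborel)" for i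
    proof -
      have "(\<integral> a. (m2 a / m1) * (a $ i - mu $ i)\<^sup>2 \<partial>lborel) = (\<integral> a. m2 a * (a $ i - mu $ i)\<^sup>2 / m1 \<partial>lborel)" by simp
      also have "\<dots> = (\<integral> a. m2 a * (a $ i - mu $ i)\<^sup>2 \<partial>lborel) / m1" by (rule integral_divide_zero)
      finally show ?thesis using False by simp
    qed
    have "m1 * T = (\<Sum>i\<in>UNIV. \<integral> a. m2 a * (a $ i - mu $ i)\<^sup>2 \<partial>lborel)"
      unfolding T_def sum_distrib_left Ti ..
    moreover have "(\<integral> a. m2 a * (a $ i - c $ i)\<^sup>2 \<partial>lborel) = (\<integral> a. m2 a * (a $ i - mu $ i)\<^sup>2 \<partial>lborel) + m1 * (mu $ i - c $ i)\<^sup>2" for i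
    proof -
      have M: "(\<integral> a. m2 a * a $ i \<partial>lborel) = m1 * mu $ i" using mu_i[of i] False by simp
      show ?thesis unfolding ce M by (simp add: power2_eq_square algebra_simps)
    qed
    ultimately show ?thesis unfolding lhs by (simp add: sum.distrib sum_distrib_left)
  qed
qed


lemma meas2_compose:
  assumes h: "(\<lambda>ab. h (fst ab) (snd ab)) \<in> borel_measurable (lborel \<Otimes>\<^sub>M lborel)"
    and f: "f \<in> measurable M lborel" and g: "g \<in> measurable M lborel"
  shows "(\<lambda>x. h (f x) (g x)) \<in> borel_measurable M"
  using measurable_compose[OF measurable_Pair[OF f g] h] by simp

context qs begin

lemma mom_nn:
  assumes "n \<le> N"
  shows "(\<integral>\<^sup>+ x. ennreal (q x) * ennreal (1 + (\<Sum>i\<in>UNIV. (x n $ i)\<^sup>2)) \<partial>Om) \<noteq> \<infinity>"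
proof -
  have i1: "integrable Om (\<lambda>x. q x * (\<Sum>i\<in>UNIV. (x n $ i)\<^sup>2))"
    using q_moments[OF assms] by (simp add: norm_sq_vec)
  have i0: "integrable Om q"
    using q_prob q_nonneg by (intro integrableI_nn_integral_finite[where x=1]) (auto simp: q_meas intro!: AE_I2)
  have "integrable Om (\<lambda>x. q x + q x * (\<Sum>i\<in>UNIV. (x n $ i)\<^sup>2))" using i0 i1 by auto
  then have "(\<integral>\<^sup>+ x. ennreal (q x + q x * (\<Sum>i\<in>UNIV. (x n $ i)\<^sup>2)) \<partial>Om) = ennreal (\<integral> x. q x + q x * (\<Sum>i\<in>UNIV. (x n $ i)\<^sup>2) \<partial>Om)"
    by (rule nn_integral_eq_integral) (auto intro!: AE_I2 add_nonneg_nonneg mult_nonneg_nonneg sum_nonneg q_nonneg)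
  then have "(\<integral>\<^sup>+ x. ennreal (q x + q x * (\<Sum>i\<in>UNIV. (x n $ i)\<^sup>2)) \<partial>Om) < \<infinity>" by simp
  moreover have "(\<integral>\<^sup>+ x. ennreal (q x + q x * (\<Sum>i\<in>UNIV. (x n $ i)\<^sup>2)) \<partial>Om) = (\<integral>\<^sup>+ x. ennreal (q x) * ennreal (1 + (\<Sum>i\<in>UNIV. (x n $ i)\<^sup>2)) \<partial>Om)"
    by (intro nn_integral_cong) (auto simp: q_nonneg ennreal_mult'[symmetric] algebra_simps)
  ultimately show ?thesis by simp
qed

definition good :: "nat \<Rightarrow> real^'d \<Rightarrow> bool" where
  "good n b \<longleftrightarrow> Q1 n b \<noteq> \<infinity> \<and> (\<integral>\<^sup>+ a. Q2 n a b * ennreal (1 + (\<Sum>i\<in>UNIV. (a $ i)\<^sup>2)) \<partial>lborel) \<noteq> \<infinity>"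

lemma Q2_meas_a: "1 \<le> n \<Longrightarrow> n \<le> N \<Longrightarrow> (\<lambda>a. Q2 n a b) \<in> borel_measurable lborel"
  by (rule meas2_compose[where h = "Q2 n", OF Q2_meas]) auto

lemma marg2_meas_a: "1 \<le> n \<Longrightarrow> n \<le> N \<Longrightarrow> (\<lambda>a. marg2 N q n a b) \<in> borel_measurable lborel"
  by (rule meas2_compose[where h = "marg2 N q n", OF marg2_meas]) auto

lemma good_AE:
  assumes n: "1 \<le> n" "n \<le> N"
  shows "AE b in lborel. good n b"
proof -
  have m: "(\<lambda>b. \<integral>\<^sup>+ a. Q2 n a b * ennreal (1 + (\<Sum>i\<in>UNIV. (a $ i)\<^sup>2)) \<partial>lborel) \<in> borel_measurable lborel"
  proof (rule sigma_finite_measure.borel_measurable_nn_integral[OF lborel.sigma_finite_measure_axioms])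
    have "(\<lambda>p. Q2 n (snd p) (fst p)) \<in> borel_measurable (lborel \<Otimes>\<^sub>M lborel)"
      by (rule meas2_compose[where h = "Q2 n", OF Q2_meas[OF n]]) auto
    moreover have "(\<lambda>p::(real^'d) \<times> (real^'d). ennreal (1 + (\<Sum>i\<in>UNIV. (snd p $ i)\<^sup>2))) \<in> borel_measurable (lborel \<Otimes>\<^sub>M lborel)"
      by measurable
    ultimately show "(\<lambda>(b, a). Q2 n a b * ennreal (1 + (\<Sum>i\<in>UNIV. (a $ i)\<^sup>2))) \<in> borel_measurable (lborel \<Otimes>\<^sub>M lborel)"
      unfolding case_prod_beta' by (rule borel_measurable_times_ennreal)
  qed
  have "(\<integral>\<^sup>+ b. \<integral>\<^sup>+ a. Q2 n a b * ennreal (1 + (\<Sum>i\<in>UNIV. (a $ i)\<^sup>2)) \<partial>lborel \<partial>lborel) \<noteq> \<infinity>"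
    using mom_nn[of "n - 1"] n nn_marg2[OF n, of "\<lambda>a b. ennreal (1 + (\<Sum>i\<in>UNIV. (a $ i)\<^sup>2))"]
    by (simp add: case_prod_beta')
  from nn_integral_PInf_AE[OF m this] Q1_fin[OF n(2)]
  show ?thesis unfolding good_def by eventually_elim auto
qed

lemma good_facts:
  assumes n: "1 \<le> n" "n \<le> N" and g: "good n b"
  shows "AE a in lborel. Q2 n a b = ennreal (marg2 N q n a b)"
    and "integrable lborel (\<lambda>a. marg2 N q n a b)"
    and "integrable lborel (\<lambda>a. marg2 N q n a b * (\<Sum>i\<in>UNIV. (a $ i)\<^sup>2))"
    and "marg1 N q n b = (\<integral> a. marg2 N q n a b \<partial>lborel)"
proof -
  have Q1f: "Q1 n b \<noteq> \<infinity>" and Q2f: "(\<integral>\<^sup>+ a. Q2 n a b * ennreal (1 + (\<Sum>i\<in>UNIV. (a $ i)\<^sup>2)) \<partial>lborel) \<noteq> \<infinity>"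
    using g by (auto simp: good_def)
  have "AE a in lborel. Q2 n a b \<noteq> \<infinity>"
    by (rule nn_integral_PInf_AE[OF Q2_meas_a[OF n]]) (use Q1f Q1_Q2[OF n] in simp)
  then show AE2: "AE a in lborel. Q2 n a b = ennreal (marg2 N q n a b)"
  proof eventually_elim
    fix a assume "Q2 n a b \<noteq> \<infinity>"
    have "ennreal (marg2 N q n a b) = Q2 n a b"
      unfolding marg2_def Q2_def
      by (rule nn_fin_int(2)) (use \<open>Q2 n a b \<noteq> \<infinity>\<close> q_upd2c_meas[OF n] q_nonneg_upd2[OF n] in \<open>auto simp: Q2_def intro!: AE_I2\<close>)
    then show "Q2 n a b = ennreal (marg2 N q n a b)" by simp
  qed
  have eq1: "(\<integral>\<^sup>+ a. ennreal (marg2 N q n a b) \<partial>lborel) = Q1 n b"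
    using Q1_Q2[OF n, of b] nn_integral_cong_AE[OF AE2] by simp
  show i2: "integrable lborel (\<lambda>a. marg2 N q n a b)"
    by (rule nn_fin_int(1)) (use marg2_meas_a[OF n] marg2_nonneg[OF n] eq1 Q1f in auto)
  have "ennreal (\<integral> a. marg2 N q n a b \<partial>lborel) = Q1 n b"
    using nn_fin_int(2)[of "\<lambda>a. marg2 N q n a b" lborel] marg2_meas_a[OF n] marg2_nonneg[OF n] eq1 Q1f by auto
  also have "\<dots> = ennreal (marg1 N q n b)" using Q1_marg1[OF n(2) Q1f] .
  finally show "marg1 N q n b = (\<integral> a. marg2 N q n a b \<partial>lborel)"
  proof -
    assume e: "ennreal (\<integral> a. marg2 N q n a b \<partial>lborel) = ennreal (marg1 N q n b)"
    have "(\<integral> a. marg2 N q n a b \<partial>lborel) \<ge> 0" by (rule integral_nonneg_AE) (use marg2_nonneg[OF n] in auto)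
    then show ?thesis using e marg1_nonneg[OF n(2)] by (simp add: ennreal_inj)
  qed
  have "(\<integral>\<^sup>+ a. ennreal (marg2 N q n a b * (\<Sum>i\<in>UNIV. (a $ i)\<^sup>2)) \<partial>lborel) \<le> (\<integral>\<^sup>+ a. Q2 n a b * ennreal (1 + (\<Sum>i\<in>UNIV. (a $ i)\<^sup>2)) \<partial>lborel)"
    using AE2
  proof (intro nn_integral_mono_AE, eventually_elim)
    fix a assume "Q2 n a b = ennreal (marg2 N q n a b)"
    then show "ennreal (marg2 N q n a b * (\<Sum>i\<in>UNIV. (a $ i)\<^sup>2)) \<le> Q2 n a b * ennreal (1 + (\<Sum>i\<in>UNIV. (a $ i)\<^sup>2))"
    proof -
      have m0: "marg2 N q n a b \<ge> 0" by (rule marg2_nonneg[OF n])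
      have "marg2 N q n a b * (\<Sum>i\<in>UNIV. (a $ i)\<^sup>2) \<le> marg2 N q n a b * (1 + (\<Sum>i\<in>UNIV. (a $ i)\<^sup>2))"
        by (rule mult_left_mono) (use m0 in auto)
      then have "ennreal (marg2 N q n a b * (\<Sum>i\<in>UNIV. (a $ i)\<^sup>2)) \<le> ennreal (marg2 N q n a b * (1 + (\<Sum>i\<in>UNIV. (a $ i)\<^sup>2)))"
        by (rule ennreal_leI)
      also have "\<dots> = ennreal (marg2 N q n a b) * ennreal (1 + (\<Sum>i\<in>UNIV. (a $ i)\<^sup>2))"
        by (rule ennreal_mult'[OF m0])
      finally show ?thesis using \<open>Q2 n a b = ennreal (marg2 N q n a b)\<close> by simp
    qed
  qed
  then have "(\<integral>\<^sup>+ a. ennreal (marg2 N q n a b * (\<Sum>i\<in>UNIV. (a $ i)\<^sup>2)) \<partial>lborel) \<noteq> \<infinity>"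
    using Q2f by (auto simp: top_unique)
  then show "integrable lborel (\<lambda>a. marg2 N q n a b * (\<Sum>i\<in>UNIV. (a $ i)\<^sup>2))"
    by (intro nn_fin_int(1)) (use marg2_meas_a[OF n] marg2_nonneg[OF n] in \<open>auto intro!: mult_nonneg_nonneg sum_nonneg\<close>)
qed

end

lemma var_pos:
  fixes m2 :: "real^'d \<Rightarrow> real" and mu :: "real^'d"
  assumes nn: "\<And>a. m2 a \<ge> 0" and meas: "m2 \<in> borel_measurable lborel"
    and i0: "integrable lborel m2"
    and iv: "integrable lborel (\<lambda>a. m2 a * (\<Sum>i\<in>UNIV. (a $ i - mu $ i)\<^sup>2))"
    and pos: "(\<integral> a. m2 a \<partial>lborel) > 0"
  shows "(\<integral> a. m2 a * (\<Sum>i\<in>UNIV. (a $ i - mu $ i)\<^sup>2) \<partial>lborel) > 0"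
proof (rule ccontr)
  assume "\<not> ?thesis"
  moreover have "(\<integral> a. m2 a * (\<Sum>i\<in>UNIV. (a $ i - mu $ i)\<^sup>2) \<partial>lborel) \<ge> 0"
    by (rule integral_nonneg_AE) (auto intro!: AE_I2 mult_nonneg_nonneg sum_nonneg nn)
  ultimately have "(\<integral> a. m2 a * (\<Sum>i\<in>UNIV. (a $ i - mu $ i)\<^sup>2) \<partial>lborel) = 0" by simp
  then have A: "AE a in lborel. m2 a * (\<Sum>i\<in>UNIV. (a $ i - mu $ i)\<^sup>2) = 0"
  proof -
    have "AE x in lborel. 0 \<le> m2 x * (\<Sum>i\<in>UNIV. (x $ i - mu $ i)\<^sup>2)"
      by (auto intro!: AE_I2 mult_nonneg_nonneg sum_nonneg nn)
    then show ?thesis using integral_nonneg_eq_0_iff_AE[OF iv] \<open>(\<integral> a. m2 a * (\<Sum>i\<in>UNIV. (a $ i - mu $ i)\<^sup>2) \<partial>lborel) = 0\<close> by blast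
  qed
  have B: "AE a in lborel. a \<notin> {mu}"
    by (rule AE_not_in) (simp add: null_sets_def)
  have "AE a in lborel. m2 a = 0"
    using A B
  proof eventually_elim
    fix a assume h: "m2 a * (\<Sum>i\<in>UNIV. (a $ i - mu $ i)\<^sup>2) = 0" "a \<notin> {mu}"
    then obtain i where "a $ i \<noteq> mu $ i" by (auto simp: vec_eq_iff)
    then have "(a $ i - mu $ i)\<^sup>2 > 0" by simp
    moreover have "(a $ i - mu $ i)\<^sup>2 \<le> (\<Sum>j\<in>UNIV. (a $ j - mu $ j)\<^sup>2)"
      by (rule member_le_sum) auto
    ultimately have "(\<Sum>j\<in>UNIV. (a $ j - mu $ j)\<^sup>2) > 0" by linarith
    then show "m2 a = 0" using h(1) by simp
  qed
  then have "(\<integral> a. m2 a \<partial>lborel) = 0" by (rule integral_eq_zero_AE)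
  then show False using pos by simp
qed

lemma gauss_pos: "s > 0 \<Longrightarrow> gauss_iso m s y > 0"
  unfolding gauss_iso_def by (rule prod_pos) (auto intro!: normal_density_pos)

lemma ln_normal: "s > 0 \<Longrightarrow> ln (normal_density m (sqrt s) x) = - (ln (2 * pi * s) / 2) - (x - m)\<^sup>2 / (2 * s)"
  unfolding normal_density_def by (simp add: ln_mult ln_div ln_sqrt)

lemma ln_gauss:
  assumes "s > 0"
  shows "ln (gauss_iso m s (y :: real^'d)) = - (real CARD('d) / 2 * ln (2 * pi * s)) - (\<Sum>i\<in>UNIV. (y $ i - m $ i)\<^sup>2) / (2 * s)"
proof -
  have "ln (gauss_iso m s y) = (\<Sum>i\<in>UNIV. ln (normal_density (m $ i) (sqrt s) (y $ i)))"
    unfolding gauss_iso_def by (rule ln_prod) (use assms normal_density_pos in \<open>auto simp: less_imp_neq[symmetric]\<close>)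
  also have "\<dots> = (\<Sum>i\<in>UNIV. - (ln (2 * pi * s) / 2) - (y $ i - m $ i)\<^sup>2 / (2 * s))"
    using ln_normal[OF assms] by simp
  also have "\<dots> = - (real CARD('d) / 2 * ln (2 * pi * s)) - (\<Sum>i\<in>UNIV. (y $ i - m $ i)\<^sup>2) / (2 * s)"
    by (simp add: sum_subtractf sum_divide_distrib)
  finally show ?thesis .
qed

lemma scalar_ineq:
  assumes "s > 0" "t > 0" "(d::real) \<ge> 0"
  shows "d / 2 * ln (2 * pi * t) + d / 2 \<le> d / 2 * ln (2 * pi * s) + d * t / (2 * s)"
proof -
  have "ln (t / s) \<le> t / s - 1" by (rule ln_le_minus_one) (use assms in auto)
  then have "ln t - ln s \<le> t / s - 1" using assms by (simp add: ln_div)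
  moreover have "ln (2 * pi * t) = ln (2 * pi) + ln t" "ln (2 * pi * s) = ln (2 * pi) + ln s"
    using assms by (simp_all add: ln_mult)
  ultimately have "ln (2 * pi * t) + 1 \<le> ln (2 * pi * s) + t / s" by simp
  then have "d / 2 * (ln (2 * pi * t) + 1) \<le> d / 2 * (ln (2 * pi * s) + t / s)"
    by (rule mult_left_mono) (use assms in simp)
  then show ?thesis by (simp add: algebra_simps)
qed


lemma hp: "ennreal (a + b) \<le> ennreal a + ennreal b"
proof (cases "a \<ge> 0 \<and> b \<ge> 0")
  case True then show ?thesis by (simp add: ennreal_plus)
next
  case False
  then consider "a < 0" | "b < 0" by linarith
  then show ?thesis
  proof cases
    case 1
    then have "ennreal (a + b) \<le> ennreal b" by (intro ennreal_leI) simp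
    also have "\<dots> \<le> ennreal a + ennreal b" by (rule add_increasing) simp_all
    finally show ?thesis .
  next
    case 2
    then have "ennreal (a + b) \<le> ennreal a" by (intro ennreal_leI) simp
    also have "\<dots> \<le> ennreal a + ennreal b" by (rule add_increasing2) simp_all
    finally show ?thesis .
  qed
qed

lemma hpl: "a \<le> b + c \<Longrightarrow> ennreal a \<le> ennreal b + ennreal c"
  by (rule order_trans[OF ennreal_leI hp])

lemma pa: "e2ennreal (F + ereal u) \<le> e2ennreal F + ennreal \<bar>u\<bar>"
proof (cases F)
  case (real r)
  have "ennreal (r + u) \<le> ennreal r + ennreal \<bar>u\<bar>" by (rule hpl) simp
  then show ?thesis using real by simp
qed simp_all

lemma pb: "e2ennreal (- (F + ereal u)) \<le> e2ennreal (- F) + ennreal \<bar>u\<bar>"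
proof -
  have "- (F + ereal u) = - F + ereal (- u)" by (cases F) simp_all
  then show ?thesis using pa[of "- F" "- u"] by simp
qed

lemma pc: "E \<ge> 0 \<Longrightarrow> e2ennreal F \<le> e2ennreal (F + ereal u + ereal E) + ennreal \<bar>u\<bar>"
proof (cases F)
  case (real r)
  assume "E \<ge> 0"
  then have "ennreal r \<le> ennreal (r + u + E) + ennreal \<bar>u\<bar>" by (intro hpl) simp
  then show ?thesis using real by simp
qed simp_all

lemma pd: "E \<ge> 0 \<Longrightarrow> ennreal E \<le> e2ennreal (F + ereal u + ereal E) + e2ennreal (- F) + ennreal \<bar>u\<bar>"
proof (cases F)
  case (real r)
  assume "E \<ge> 0"
  have "ennreal E \<le> ennreal (r + u + E) + ennreal (- r + \<bar>u\<bar>)" by (intro hpl) simp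
  also have "\<dots> \<le> ennreal (r + u + E) + (ennreal (- r) + ennreal \<bar>u\<bar>)" by (intro add_left_mono hp)
  finally show ?thesis using real by (simp add: add.assoc)
qed simp_all

lemma pabs: "ennreal \<bar>real_of_ereal F\<bar> \<le> e2ennreal F + e2ennreal (- F)"
proof (cases F)
  case (real r)
  have "ennreal \<bar>r\<bar> \<le> ennreal r + ennreal (- r)" by (cases "r \<ge> 0") (simp_all add: ennreal_neg)
  then show ?thesis using real by simp
qed simp_all

definition PP :: "'a measure \<Rightarrow> ('a \<Rightarrow> ereal) \<Rightarrow> ennreal" where
  "PP M F = (\<integral>\<^sup>+ x. e2ennreal (F x) \<partial>M)"
definition NN :: "'a measure \<Rightarrow> ('a \<Rightarrow> ereal) \<Rightarrow> ennreal" where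
  "NN M F = (\<integral>\<^sup>+ x. e2ennreal (- F x) \<partial>M)"

lemma eint_PN: "eint M F = enn2ereal (PP M F) - enn2ereal (NN M F)"
  unfolding eint_def PP_def NN_def ..

lemma int_abs_fin: "integrable M u \<Longrightarrow> (\<integral>\<^sup>+ x. ennreal \<bar>u x\<bar> \<partial>M) < \<infinity>"
  using integrable_iff_bounded[of M u] by simp

lemma nn_le_add:
  assumes "\<And>x. x \<in> space M \<Longrightarrow> f x \<le> g x + h x" "g \<in> borel_measurable M" "h \<in> borel_measurable M"
  shows "(\<integral>\<^sup>+ x. f x \<partial>M) \<le> (\<integral>\<^sup>+ x. g x \<partial>M) + (\<integral>\<^sup>+ x. h x \<partial>M)"
proof -
  have "(\<integral>\<^sup>+ x. f x \<partial>M) \<le> (\<integral>\<^sup>+ x. g x + h x \<partial>M)" by (rule nn_integral_mono) (use assms in auto)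
  also have "\<dots> = (\<integral>\<^sup>+ x. g x \<partial>M) + (\<integral>\<^sup>+ x. h x \<partial>M)" by (rule nn_integral_add) (use assms in auto)
  finally show ?thesis .
qed

lemma eint_real:
  fixes g :: "'a \<Rightarrow> real"
  assumes g: "integrable M g" and F: "AE x in M. F x = ereal (g x)"
  shows "eint M F = ereal (integral\<^sup>L M g)"
proof -
  have P: "PP M F = (\<integral>\<^sup>+ x. ennreal (g x) \<partial>M)"
    unfolding PP_def by (rule nn_integral_cong_AE) (use F in eventually_elim, simp)
  have N: "NN M F = (\<integral>\<^sup>+ x. ennreal (- g x) \<partial>M)"
    unfolding NN_def by (rule nn_integral_cong_AE) (use F in eventually_elim, simp)
  have fin: "(\<integral>\<^sup>+ x. ennreal (g x) \<partial>M) < \<infinity>" "(\<integral>\<^sup>+ x. ennreal (- g x) \<partial>M) < \<infinity>"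
    using int_abs_fin[OF g] by (auto elim!: le_less_trans[rotated] intro!: nn_integral_mono ennreal_leI)
  have "integral\<^sup>L M g = enn2real (\<integral>\<^sup>+ x. ennreal (g x) \<partial>M) - enn2real (\<integral>\<^sup>+ x. ennreal (- g x) \<partial>M)"
    by (rule real_lebesgue_integral_def[OF g])
  then show ?thesis
    unfolding eint_PN P N using fin
    by (cases "(\<integral>\<^sup>+ x. ennreal (g x) \<partial>M)"; cases "(\<integral>\<^sup>+ x. ennreal (- g x) \<partial>M)") auto
qed


lemma top_add_fin:
  assumes "(a::ennreal) \<le> b + c" "a = \<infinity>" "c < \<infinity>" shows "b = \<infinity>"
proof -
  have "b + c = top" using assms(1,2) by (simp add: top_unique)
  then have "b = top \<or> c = top" by (rule ennreal_add_eq_top[THEN iffD1])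
  then show ?thesis using assms(3) by auto
qed

lemma eint_Pinf: "PP M F = \<infinity> \<Longrightarrow> eint M F = \<infinity>"
  unfolding eint_PN by simp

lemma eint_Ninf: assumes "PP M F < \<infinity>" "NN M F = \<infinity>" shows "eint M F = - \<infinity>"
proof -
  obtain r where "PP M F = ennreal r" "r \<ge> 0" using assms(1) by (cases "PP M F") auto
  then show ?thesis unfolding eint_PN using assms(2) by simp
qed

lemma eint_fin_real:
  assumes F: "F \<in> borel_measurable M" and P: "PP M F < \<infinity>" and N: "NN M F < \<infinity>"
  shows "integrable M (\<lambda>x. real_of_ereal (F x))" "AE x in M. F x = ereal (real_of_ereal (F x))"
proof -
  have a1: "AE x in M. e2ennreal (F x) \<noteq> \<infinity>"
    by (rule nn_integral_PInf_AE) (use F P in \<open>auto simp: PP_def\<close>)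
  have a2: "AE x in M. e2ennreal (- F x) \<noteq> \<infinity>"
    by (rule nn_integral_PInf_AE) (use F N in \<open>auto simp: NN_def\<close>)
  show "AE x in M. F x = ereal (real_of_ereal (F x))"
    using a1 a2
  proof eventually_elim
    fix x assume "e2ennreal (F x) \<noteq> \<infinity>" "e2ennreal (- F x) \<noteq> \<infinity>"
    then show "F x = ereal (real_of_ereal (F x))" by (cases "F x") simp_all
  qed
  have "(\<integral>\<^sup>+ x. ennreal (norm (real_of_ereal (F x))) \<partial>M) \<le> PP M F + NN M F"
    unfolding PP_def NN_def by (rule nn_le_add) (use F pabs in auto)
  also have "\<dots> < \<infinity>" using P N by (simp add: ennreal_add_less_top)
  finally have lt: "(\<integral>\<^sup>+ x. ennreal (norm (real_of_ereal (F x))) \<partial>M) < \<infinity>" .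
  have m: "(\<lambda>x. real_of_ereal (F x)) \<in> borel_measurable M" using F by measurable
  show "integrable M (\<lambda>x. real_of_ereal (F x))" by (rule integrableI_bounded[OF m lt])
qed


lemma eint_add_int:
  assumes F: "F \<in> borel_measurable M" and u: "integrable M u"
  shows "eint M (\<lambda>x. F x + ereal (u x)) = eint M F + ereal (integral\<^sup>L M u)"
proof -
  have um: "u \<in> borel_measurable M" using u by auto
  define U where "U = (\<integral>\<^sup>+ x. ennreal \<bar>u x\<bar> \<partial>M)"
  have U: "U < \<infinity>" unfolding U_def by (rule int_abs_fin[OF u])
  have FU: "(\<lambda>x. F x + ereal (u x)) \<in> borel_measurable M" using F um by measurable
  have P1: "PP M (\<lambda>x. F x + ereal (u x)) \<le> PP M F + U"
    unfolding PP_def U_def by (rule nn_le_add) (use F um pa in auto)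
  have P2: "PP M F \<le> PP M (\<lambda>x. F x + ereal (u x)) + U"
  proof -
    have "e2ennreal (F x) \<le> e2ennreal (F x + ereal (u x)) + ennreal \<bar>u x\<bar>" for x
      using pa[of "F x + ereal (u x)" "- u x"] by (cases "F x") auto
    then show ?thesis unfolding PP_def U_def by (intro nn_le_add) (use FU um in auto)
  qed
  have N1: "NN M (\<lambda>x. F x + ereal (u x)) \<le> NN M F + U"
    unfolding NN_def U_def by (rule nn_le_add) (use F um pb in auto)
  have N2: "NN M F \<le> NN M (\<lambda>x. F x + ereal (u x)) + U"
  proof -
    have "e2ennreal (- F x) \<le> e2ennreal (- (F x + ereal (u x))) + ennreal \<bar>u x\<bar>" for x
      using pb[of "F x + ereal (u x)" "- u x"] by (cases "F x") auto
    then show ?thesis unfolding NN_def U_def by (intro nn_le_add) (use FU um in auto)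
  qed
  show ?thesis
  proof -
    consider (Pinf) "PP M F = \<infinity>" | (Ninf) "PP M F < \<infinity>" "NN M F = \<infinity>" | (fin) "PP M F < \<infinity>" "NN M F < \<infinity>"
      by (cases "PP M F = \<infinity>"; cases "NN M F = \<infinity>") (simp_all add: less_top[symmetric])
    then show ?thesis
    proof cases
    case Pinf
    then have "PP M (\<lambda>x. F x + ereal (u x)) = \<infinity>" using top_add_fin[OF P2 _ U] by simp
    then show ?thesis using Pinf by (simp add: eint_Pinf)
  next
    case Ninf
    then have "NN M (\<lambda>x. F x + ereal (u x)) = \<infinity>" using top_add_fin[OF N2 _ U] by simp
    moreover have "PP M (\<lambda>x. F x + ereal (u x)) < \<infinity>"
      using P1 Ninf(1) U by (simp add: ennreal_add_less_top le_less_trans)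
    ultimately show ?thesis using Ninf by (simp add: eint_Ninf)
  next
    case fin
    note g = eint_fin_real[OF F fin]
    have "eint M F = ereal (\<integral> x. real_of_ereal (F x) \<partial>M)" by (rule eint_real[OF g])
    moreover have "eint M (\<lambda>x. F x + ereal (u x)) = ereal (\<integral> x. real_of_ereal (F x) + u x \<partial>M)"
      using g(2)
    proof (intro eint_real[OF Bochner_Integration.integrable_add[OF g(1) u]], eventually_elim)
      fix x assume "F x = ereal (real_of_ereal (F x))"
      then show "F x + ereal (u x) = ereal (real_of_ereal (F x) + u x)" by (metis plus_ereal.simps(1))
    qed
    moreover have "(\<integral> x. real_of_ereal (F x) + u x \<partial>M) = (\<integral> x. real_of_ereal (F x) \<partial>M) + integral\<^sup>L M u"
      by (rule Bochner_Integration.integral_add[OF g(1) u])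
    ultimately show ?thesis by simp
  qed
  qed
qed


lemma eint_ge:
  assumes F: "F \<in> borel_measurable M" and u: "integrable M u" and w: "integrable M w"
    and E: "E \<in> borel_measurable M" and Enn: "\<And>x. x \<in> space M \<Longrightarrow> E x \<ge> 0"
    and le: "ereal (integral\<^sup>L M w) \<le> ereal (integral\<^sup>L M u) + enn2ereal (\<integral>\<^sup>+ x. ennreal (E x) \<partial>M)"
  shows "eint M (\<lambda>x. F x + ereal (w x)) \<le> eint M (\<lambda>x. F x + ereal (u x) + ereal (E x))"
proof -
  have um: "u \<in> borel_measurable M" using u by auto
  have R: "eint M (\<lambda>x. F x + ereal (w x)) = eint M F + ereal (integral\<^sup>L M w)"
    by (rule eint_add_int[OF F w])
  define U where "U = (\<integral>\<^sup>+ x. ennreal \<bar>u x\<bar> \<partial>M)"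
  have U: "U < \<infinity>" unfolding U_def by (rule int_abs_fin[OF u])
  have FuE: "(\<lambda>x. F x + ereal (u x) + ereal (E x)) \<in> borel_measurable M" using F um E by measurable
  show ?thesis
  proof (cases "(\<integral>\<^sup>+ x. ennreal (E x) \<partial>M) = \<infinity>")
    case False
    have Ei: "integrable M E" and Ee: "ennreal (integral\<^sup>L M E) = (\<integral>\<^sup>+ x. ennreal (E x) \<partial>M)"
      using nn_fin_int[OF E AE_I2[OF Enn] False] by auto
    have eq: "(\<lambda>x. F x + ereal (u x) + ereal (E x)) = (\<lambda>x. F x + ereal (u x + E x))"
    proof (rule ext)
      fix x show "F x + ereal (u x) + ereal (E x) = F x + ereal (u x + E x)" by (cases "F x") simp_all
    qed
    have L: "eint M (\<lambda>x. F x + ereal (u x) + ereal (E x)) = eint M F + ereal (integral\<^sup>L M u + integral\<^sup>L M E)"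
      unfolding eq using eint_add_int[OF F Bochner_Integration.integrable_add[OF u Ei]] Bochner_Integration.integral_add[OF u Ei] by simp
    have "enn2ereal (\<integral>\<^sup>+ x. ennreal (E x) \<partial>M) = ereal (integral\<^sup>L M E)"
    proof -
      have "integral\<^sup>L M E \<ge> 0" by (rule integral_nonneg_AE) (rule AE_I2[OF Enn])
      then show ?thesis unfolding Ee[symmetric] by simp
    qed
    then have "ereal (integral\<^sup>L M w) \<le> ereal (integral\<^sup>L M u + integral\<^sup>L M E)" using le by simp
    then show ?thesis unfolding L R by (rule add_left_mono)
  next
    case True
    have PFuE: "PP M (\<lambda>x. F x + ereal (u x) + ereal (E x)) = \<infinity>" if h: "PP M F = \<infinity> \<or> NN M F < \<infinity>"
    proof (cases "PP M F = \<infinity>")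
      case True
      have "PP M F \<le> PP M (\<lambda>x. F x + ereal (u x) + ereal (E x)) + U"
        unfolding PP_def U_def by (rule nn_le_add) (use FuE um pc Enn in auto)
      from top_add_fin[OF this True U] show ?thesis .
    next
      case False
      then have NF: "NN M F < \<infinity>" using h by simp
      have "(\<integral>\<^sup>+ x. ennreal (E x) \<partial>M) \<le> PP M (\<lambda>x. F x + ereal (u x) + ereal (E x)) + (NN M F + U)"
      proof -
        have "(\<integral>\<^sup>+ x. ennreal (E x) \<partial>M) \<le> PP M (\<lambda>x. F x + ereal (u x) + ereal (E x)) + (\<integral>\<^sup>+ x. e2ennreal (- F x) + ennreal \<bar>u x\<bar> \<partial>M)"
          unfolding PP_def by (rule nn_le_add) (use FuE um F pd Enn in \<open>auto simp: add.assoc\<close>)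
        also have "(\<integral>\<^sup>+ x. e2ennreal (- F x) + ennreal \<bar>u x\<bar> \<partial>M) = NN M F + U"
          unfolding NN_def U_def by (rule nn_integral_add) (use F um in auto)
        finally show ?thesis .
      qed
      moreover have "NN M F + U < \<infinity>" using NF U by (simp add: ennreal_add_less_top)
      ultimately show ?thesis using top_add_fin True by blast
    qed
    show ?thesis
    proof (cases "PP M F = \<infinity> \<or> NN M F < \<infinity>")
      case True
      then have "eint M (\<lambda>x. F x + ereal (u x) + ereal (E x)) = \<infinity>" using PFuE eint_Pinf by blast
      then show ?thesis by simp
    next
      case False
      then have "PP M F < \<infinity>" "NN M F = \<infinity>" by (auto simp: less_top[symmetric])
      then have "eint M F = - \<infinity>" by (rule eint_Ninf)
      then show ?thesis unfolding R by simp
    qed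
  qed
qed


context qs begin

lemma good_decomp:
  assumes n: "1 \<le> n" "n \<le> N" and g: "good n b"
  shows "integrable lborel (\<lambda>a. marg2 N q n a b * (\<Sum>i\<in>UNIV. (a $ i - c $ i)\<^sup>2))"
    and "(\<integral> a. marg2 N q n a b * (\<Sum>i\<in>UNIV. (a $ i - c $ i)\<^sup>2) \<partial>lborel)
          = marg1 N q n b * cond_trace_cov N q n b + marg1 N q n b * (\<Sum>i\<in>UNIV. (opt_mean N q n b $ i - c $ i)\<^sup>2)"
proof -
  note gf = good_facts[OF n g]
  note vd = var_decomp[of "\<lambda>a. marg2 N q n a b", OF marg2_nonneg[OF n] marg2_meas_a[OF n] gf(2) gf(3), of c]
  show "integrable lborel (\<lambda>a. marg2 N q n a b * (\<Sum>i\<in>UNIV. (a $ i - c $ i)\<^sup>2))" by (rule vd(1))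
  have om: "opt_mean N q n b = (\<integral> a. (marg2 N q n a b / (\<integral> a. marg2 N q n a b \<partial>lborel)) *\<^sub>R a \<partial>lborel)"
    unfolding opt_mean_def cond_dens_def gf(4) ..
  show "(\<integral> a. marg2 N q n a b * (\<Sum>i\<in>UNIV. (a $ i - c $ i)\<^sup>2) \<partial>lborel)
          = marg1 N q n b * cond_trace_cov N q n b + marg1 N q n b * (\<Sum>i\<in>UNIV. (opt_mean N q n b $ i - c $ i)\<^sup>2)"
    unfolding vd(2) cond_trace_cov_def cond_dens_def om gf(4)[symmetric] ..
qed

lemma opt_mean_meas: assumes n: "1 \<le> n" "n \<le> N" shows "opt_mean N q n \<in> borel_measurable lborel"
proof -
  have m2: "(\<lambda>p. marg2 N q n (snd p) (fst p)) \<in> borel_measurable (lborel \<Otimes>\<^sub>M lborel)"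
    by (rule meas2_compose[where h = "marg2 N q n", OF marg2_meas[OF n]]) auto
  have m1: "(\<lambda>p. marg1 N q n (fst p)) \<in> borel_measurable (lborel \<Otimes>\<^sub>M (lborel :: (real^'d) measure))"
    by (rule measurable_compose[OF measurable_fst marg1_meas[OF n(2)]])
  have "(\<lambda>(b, a). cond_dens N q n a b *\<^sub>R a) \<in> borel_measurable (lborel \<Otimes>\<^sub>M lborel)"
    unfolding cond_dens_def case_prod_beta' using m1 m2 by measurable
  then have "(\<lambda>b. \<integral> a. cond_dens N q n a b *\<^sub>R a \<partial>lborel) \<in> borel_measurable lborel"
    by (rule sigma_finite_measure.borel_measurable_lebesgue_integral[OF lborel.sigma_finite_measure_axioms])
  then show ?thesis unfolding opt_mean_def[abs_def] .
qed

lemma ctc_meas: assumes n: "1 \<le> n" "n \<le> N" shows "cond_trace_cov N q n \<in> borel_measurable lborel"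
proof -
  have m2: "(\<lambda>p. marg2 N q n (snd p) (fst p)) \<in> borel_measurable (lborel \<Otimes>\<^sub>M lborel)"
    by (rule meas2_compose[where h = "marg2 N q n", OF marg2_meas[OF n]]) auto
  have m1: "(\<lambda>p. marg1 N q n (fst p)) \<in> borel_measurable (lborel \<Otimes>\<^sub>M (lborel :: (real^'d) measure))"
    by (rule measurable_compose[OF measurable_fst marg1_meas[OF n(2)]])
  have mo: "(\<lambda>p. opt_mean N q n (fst p)) \<in> borel_measurable (lborel \<Otimes>\<^sub>M (lborel :: (real^'d) measure))"
    by (rule measurable_compose[OF measurable_fst opt_mean_meas[OF n]])
  have "(\<lambda>b. \<integral> a. cond_dens N q n a b * (a $ i - opt_mean N q n b $ i)\<^sup>2 \<partial>lborel) \<in> borel_measurable lborel" for i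
  proof (rule sigma_finite_measure.borel_measurable_lebesgue_integral[OF lborel.sigma_finite_measure_axioms])
    show "(\<lambda>(b, a). cond_dens N q n a b * (a $ i - opt_mean N q n b $ i)\<^sup>2) \<in> borel_measurable (lborel \<Otimes>\<^sub>M lborel)"
      unfolding cond_dens_def case_prod_beta' using m1 m2 mo by measurable
  qed
  then show ?thesis unfolding cond_trace_cov_def[abs_def] by measurable
qed

lemma ctc_nonneg: assumes n: "1 \<le> n" "n \<le> N" shows "cond_trace_cov N q n b \<ge> 0"
  unfolding cond_trace_cov_def cond_dens_def
  by (intro sum_nonneg integral_nonneg_AE AE_I2 mult_nonneg_nonneg divide_nonneg_nonneg marg2_nonneg marg1_nonneg) (use n in auto)

lemma C1:
  assumes n: "1 \<le> n" "n \<le> N" and mu: "mu \<in> borel_measurable borel"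
  shows "(\<integral>\<^sup>+ x. ennreal (q x * (\<Sum>i\<in>UNIV. (x (n - 1) $ i - mu (x n) $ i)\<^sup>2)) \<partial>Om)
       = (\<integral>\<^sup>+ b. ennreal (marg1 N q n b * cond_trace_cov N q n b + marg1 N q n b * (\<Sum>i\<in>UNIV. (opt_mean N q n b $ i - mu b $ i)\<^sup>2)) \<partial>lborel)"
proof -
  have Psi: "(\<lambda>(a, b). ennreal (\<Sum>i\<in>UNIV. (a $ i - mu b $ i)\<^sup>2)) \<in> borel_measurable (lborel \<Otimes>\<^sub>M lborel)"
    using mu by measurable
  have "(\<integral>\<^sup>+ x. ennreal (q x * (\<Sum>i\<in>UNIV. (x (n - 1) $ i - mu (x n) $ i)\<^sup>2)) \<partial>Om)
      = (\<integral>\<^sup>+ x. ennreal (q x) * ennreal (\<Sum>i\<in>UNIV. (x (n - 1) $ i - mu (x n) $ i)\<^sup>2) \<partial>Om)"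
    by (rule nn_integral_cong) (simp add: ennreal_mult' q_nonneg)
  also have "\<dots> = (\<integral>\<^sup>+ b. \<integral>\<^sup>+ a. Q2 n a b * ennreal (\<Sum>i\<in>UNIV. (a $ i - mu b $ i)\<^sup>2) \<partial>lborel \<partial>lborel)"
    by (rule nn_marg2[OF n, of "\<lambda>a b. ennreal (\<Sum>i\<in>UNIV. (a $ i - mu b $ i)\<^sup>2)"]) (use Psi in simp)
  also have "\<dots> = (\<integral>\<^sup>+ b. ennreal (marg1 N q n b * cond_trace_cov N q n b + marg1 N q n b * (\<Sum>i\<in>UNIV. (opt_mean N q n b $ i - mu b $ i)\<^sup>2)) \<partial>lborel)"
    using good_AE[OF n]
  proof (intro nn_integral_cong_AE, eventually_elim)
    fix b assume g: "good n b"
    note gf = good_facts[OF n g]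
    note gd = good_decomp[OF n g, of "mu b"]
    have "(\<integral>\<^sup>+ a. Q2 n a b * ennreal (\<Sum>i\<in>UNIV. (a $ i - mu b $ i)\<^sup>2) \<partial>lborel)
        = (\<integral>\<^sup>+ a. ennreal (marg2 N q n a b * (\<Sum>i\<in>UNIV. (a $ i - mu b $ i)\<^sup>2)) \<partial>lborel)"
      using gf(1) by (intro nn_integral_cong_AE, eventually_elim) (simp add: ennreal_mult' marg2_nonneg[OF n])
    also have "\<dots> = ennreal (\<integral> a. marg2 N q n a b * (\<Sum>i\<in>UNIV. (a $ i - mu b $ i)\<^sup>2) \<partial>lborel)"
      by (rule nn_integral_eq_integral[OF gd(1)]) (auto intro!: AE_I2 mult_nonneg_nonneg sum_nonneg marg2_nonneg[OF n])
    finally show "(\<integral>\<^sup>+ a. Q2 n a b * ennreal (\<Sum>i\<in>UNIV. (a $ i - mu b $ i)\<^sup>2) \<partial>lborel)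
        = ennreal (marg1 N q n b * cond_trace_cov N q n b + marg1 N q n b * (\<Sum>i\<in>UNIV. (opt_mean N q n b $ i - mu b $ i)\<^sup>2))"
      unfolding gd(2) .
  qed
  finally show ?thesis .
qed

end

context qs begin

lemma mT_nn_le:
  assumes n: "1 \<le> n" "n \<le> N" and mu: "mu \<in> borel_measurable borel"
  shows "(\<integral>\<^sup>+ b. ennreal (marg1 N q n b * cond_trace_cov N q n b) \<partial>lborel)
      \<le> (\<integral>\<^sup>+ x. ennreal (q x * (\<Sum>i\<in>UNIV. (x (n - 1) $ i - mu (x n) $ i)\<^sup>2)) \<partial>Om)"
  unfolding C1[OF n mu]
  by (intro nn_integral_mono ennreal_leI) (auto intro!: mult_nonneg_nonneg sum_nonneg marg1_nonneg n)

lemma mT_fin: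
  assumes n: "1 \<le> n" "n \<le> N"
  shows "(\<integral>\<^sup>+ b. ennreal (marg1 N q n b * cond_trace_cov N q n b) \<partial>lborel) \<noteq> \<infinity>"
proof -
  have "(\<integral>\<^sup>+ b. ennreal (marg1 N q n b * cond_trace_cov N q n b) \<partial>lborel)
      \<le> (\<integral>\<^sup>+ x. ennreal (q x * (\<Sum>i\<in>UNIV. (x (n - 1) $ i - (\<lambda>_. 0) (x n) $ i)\<^sup>2)) \<partial>Om)"
    by (rule mT_nn_le[OF n]) simp
  also have "\<dots> \<le> (\<integral>\<^sup>+ x. ennreal (q x) * ennreal (1 + (\<Sum>i\<in>UNIV. (x (n - 1) $ i)\<^sup>2)) \<partial>Om)"
  proof (rule nn_integral_mono)
    fix x assume x: "x \<in> space Om"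
    have "ennreal (q x * (\<Sum>i\<in>UNIV. (x (n - 1) $ i)\<^sup>2)) \<le> ennreal (q x * (1 + (\<Sum>i\<in>UNIV. (x (n - 1) $ i)\<^sup>2)))"
      by (intro ennreal_leI mult_left_mono) (auto simp: q_nonneg[OF x])
    then show "ennreal (q x * (\<Sum>i\<in>UNIV. (x (n - 1) $ i - (\<lambda>_. 0) (x n) $ i)\<^sup>2)) \<le> ennreal (q x) * ennreal (1 + (\<Sum>i\<in>UNIV. (x (n - 1) $ i)\<^sup>2))"
      by (simp add: ennreal_mult' q_nonneg[OF x])
  qed
  finally show ?thesis using mom_nn[of "n - 1"] n by (auto simp: top_unique)
qed

lemma mT_meas: "1 \<le> n \<Longrightarrow> n \<le> N \<Longrightarrow> (\<lambda>b. marg1 N q n b * cond_trace_cov N q n b) \<in> borel_measurable lborel"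
  using marg1_meas ctc_meas by (simp add: borel_measurable_times)

lemma mT_int:
  assumes n: "1 \<le> n" "n \<le> N"
  shows "integrable lborel (\<lambda>b. marg1 N q n b * cond_trace_cov N q n b)"
    and "ennreal (\<integral> b. marg1 N q n b * cond_trace_cov N q n b \<partial>lborel) = (\<integral>\<^sup>+ b. ennreal (marg1 N q n b * cond_trace_cov N q n b) \<partial>lborel)"
  using nn_fin_int[OF mT_meas[OF n] _ mT_fin[OF n]] marg1_nonneg ctc_nonneg n by auto

lemma opt_var_eq:
  assumes n: "1 \<le> n" "n \<le> N"
  shows "opt_var N q n = (\<integral> b. marg1 N q n b * cond_trace_cov N q n b \<partial>lborel) / real CARD('d)"
proof -
  have "opt_var N q n = (\<integral> b. marg1 N q n b * cond_trace_cov N q n b / real CARD('d) \<partial>lborel)"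
    unfolding opt_var_def by simp
  also have "\<dots> = (\<integral> b. marg1 N q n b * cond_trace_cov N q n b \<partial>lborel) / real CARD('d)"
    by (rule integral_divide_zero)
  finally show ?thesis .
qed

lemma C1_opt:
  assumes n: "1 \<le> n" "n \<le> N"
  shows "(\<integral>\<^sup>+ x. ennreal (q x * (\<Sum>i\<in>UNIV. (x (n - 1) $ i - opt_mean N q n (x n) $ i)\<^sup>2)) \<partial>Om)
      = ennreal (real CARD('d) * opt_var N q n)"
proof -
  have m: "opt_mean N q n \<in> borel_measurable borel" using opt_mean_meas[OF n] by simp
  show ?thesis
    unfolding C1[OF n m] opt_var_eq[OF n] using mT_int(2)[OF n] by simp
qed

lemma C1_ge:
  assumes n: "1 \<le> n" "n \<le> N" and mu: "mu \<in> borel_measurable borel"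
  shows "ennreal (real CARD('d) * opt_var N q n)
      \<le> (\<integral>\<^sup>+ x. ennreal (q x * (\<Sum>i\<in>UNIV. (x (n - 1) $ i - mu (x n) $ i)\<^sup>2)) \<partial>Om)"
  using mT_nn_le[OF n mu] unfolding opt_var_eq[OF n] mT_int(2)[OF n, symmetric] by simp

lemma opt_var_pos:
  assumes n: "1 \<le> n" "n \<le> N"
  shows "opt_var N q n > 0"
proof (rule ccontr)
  assume np: "\<not> opt_var N q n > 0"
  have le: "(\<integral> b. marg1 N q n b * cond_trace_cov N q n b \<partial>lborel) \<le> 0"
  proof (rule ccontr)
    assume "\<not> (\<integral> b. marg1 N q n b * cond_trace_cov N q n b \<partial>lborel) \<le> 0"
    then have "(\<integral> b. marg1 N q n b * cond_trace_cov N q n b \<partial>lborel) > 0" by simp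
    moreover have "real CARD('d) > 0" by simp
    ultimately have "opt_var N q n > 0" unfolding opt_var_eq[OF n] by (rule divide_pos_pos)
    then show False using np by simp
  qed
  have nn: "\<And>b. marg1 N q n b * cond_trace_cov N q n b \<ge> 0"
    using marg1_nonneg ctc_nonneg n by (auto intro!: mult_nonneg_nonneg)
  have "(\<integral> b. marg1 N q n b * cond_trace_cov N q n b \<partial>lborel) \<ge> 0"
    by (rule integral_nonneg_AE) (simp add: nn)
  with le have "(\<integral> b. marg1 N q n b * cond_trace_cov N q n b \<partial>lborel) = 0" by simp
  then have z: "AE b in lborel. marg1 N q n b * cond_trace_cov N q n b = 0"
    using integral_nonneg_eq_0_iff_AE[OF mT_int(1)[OF n]] nn by blast
  have "AE b in lborel. marg1 N q n b = 0"
    using z good_AE[OF n]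
  proof eventually_elim
    fix b assume h: "marg1 N q n b * cond_trace_cov N q n b = 0" "good n b"
    show "marg1 N q n b = 0"
    proof (rule ccontr)
      assume "marg1 N q n b \<noteq> 0"
      then have pos: "marg1 N q n b > 0" using marg1_nonneg[OF n(2)] by (simp add: less_le)
      note gf = good_facts[OF n h(2)]
      note gd = good_decomp[OF n h(2), of "opt_mean N q n b"]
      have "(\<integral> a. marg2 N q n a b * (\<Sum>i\<in>UNIV. (a $ i - opt_mean N q n b $ i)\<^sup>2) \<partial>lborel) > 0"
        by (rule var_pos[OF marg2_nonneg[OF n] marg2_meas_a[OF n] gf(2) gd(1)]) (use pos gf(4) in simp)
      then show False using gd(2) h(1) by simp
    qed
  qed
  then have "AE b in lborel. ennreal (marg1 N q n b) = 0" by eventually_elim simp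
  then have "(\<integral>\<^sup>+ b. ennreal (marg1 N q n b) \<partial>lborel) = (\<integral>\<^sup>+ b. 0 \<partial>(lborel :: (real^'d) measure))"
    by (rule nn_integral_cong_AE)
  then show False using marg1_int[OF n(2)] by simp
qed

end

definition Fx :: "nat \<Rightarrow> (real^'d \<Rightarrow> real) \<Rightarrow> ((nat \<Rightarrow> real^'d) \<Rightarrow> real) \<Rightarrow> (nat \<Rightarrow> real^'d) \<Rightarrow> ereal" where
  "Fx N pN q x = (if q x \<le> 0 then 0 else if pN (x N) \<le> 0 then \<infinity> else ereal (- q x * ln (pN (x N))))"

definition uu :: "nat \<Rightarrow> ((nat \<Rightarrow> real^'d) \<Rightarrow> real) \<Rightarrow> (nat \<Rightarrow> real) \<Rightarrow> (nat \<Rightarrow> real^'d) \<Rightarrow> real" where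
  "uu N q s x = q x * ln (q x) + q x * (\<Sum>n\<in>{1..N}. real CARD('d) / 2 * ln (2 * pi * s n))"

definition EE :: "nat \<Rightarrow> ((nat \<Rightarrow> real^'d) \<Rightarrow> real) \<Rightarrow> (nat \<Rightarrow> real^'d \<Rightarrow> real^'d) \<Rightarrow> (nat \<Rightarrow> real) \<Rightarrow> (nat \<Rightarrow> real^'d) \<Rightarrow> real" where
  "EE N q mu s x = q x * (\<Sum>n\<in>{1..N}. (\<Sum>i\<in>UNIV. (x (n - 1) $ i - mu n (x n) $ i)\<^sup>2) / (2 * s n))"

lemma lin_id: "(q::real) * (a - (b - c - d)) = - q * b + (q * a + q * c) + q * d"
  by (simp add: algebra_simps)

lemma eint_cong: "(\<And>x. x \<in> space M \<Longrightarrow> f x = g x) \<Longrightarrow> eint M f = eint M g"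
  unfolding eint_def by (simp cong: nn_integral_cong)

lemma ln_chain:
  fixes x :: "nat \<Rightarrow> real^'d"
  assumes p: "pN (x N) > 0" and s: "\<And>n. n \<in> {1..N} \<Longrightarrow> s n > 0"
  shows "chain_dens N pN mu s x > 0"
    "ln (chain_dens N pN mu s x) = ln (pN (x N)) - (\<Sum>n\<in>{1..N}. real CARD('d) / 2 * ln (2 * pi * s n))
        - (\<Sum>n\<in>{1..N}. (\<Sum>i\<in>UNIV. (x (n - 1) $ i - mu n (x n) $ i)\<^sup>2) / (2 * s n))"
proof -
  have gp: "gauss_iso (mu n (x n)) (s n) (x (n - 1)) > 0" if "n \<in> {1..N}" for n
    using gauss_pos[OF s[OF that]] .
  have pp: "(\<Prod>n\<in>{1..N}. gauss_iso (mu n (x n)) (s n) (x (n - 1))) > 0"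
    by (rule prod_pos) (use gp in auto)
  show "chain_dens N pN mu s x > 0" unfolding chain_dens_def using p pp by simp
  have "ln (chain_dens N pN mu s x) = ln (pN (x N)) + ln (\<Prod>n\<in>{1..N}. gauss_iso (mu n (x n)) (s n) (x (n - 1)))"
    unfolding chain_dens_def by (rule ln_mult_pos[OF p pp])
  also have "ln (\<Prod>n\<in>{1..N}. gauss_iso (mu n (x n)) (s n) (x (n - 1))) = (\<Sum>n\<in>{1..N}. ln (gauss_iso (mu n (x n)) (s n) (x (n - 1))))"
    by (rule ln_prod) (use gp in \<open>auto simp: less_imp_neq[symmetric]\<close>)
  also have "\<dots> = (\<Sum>n\<in>{1..N}. - (real CARD('d) / 2 * ln (2 * pi * s n)) - (\<Sum>i\<in>UNIV. (x (n - 1) $ i - mu n (x n) $ i)\<^sup>2) / (2 * s n))"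
    by (rule sum.cong) (use ln_gauss s in auto)
  also have "\<dots> = - (\<Sum>n\<in>{1..N}. real CARD('d) / 2 * ln (2 * pi * s n)) - (\<Sum>n\<in>{1..N}. (\<Sum>i\<in>UNIV. (x (n - 1) $ i - mu n (x n) $ i)\<^sup>2) / (2 * s n))"
    by (simp add: sum_subtractf sum_negf)
  finally show "ln (chain_dens N pN mu s x) = ln (pN (x N)) - (\<Sum>n\<in>{1..N}. real CARD('d) / 2 * ln (2 * pi * s n))
        - (\<Sum>n\<in>{1..N}. (\<Sum>i\<in>UNIV. (x (n - 1) $ i - mu n (x n) $ i)\<^sup>2) / (2 * s n))" by simp
qed

lemma KL_point:
  fixes x :: "nat \<Rightarrow> real^'d"
  assumes q: "q x \<ge> 0" and pN: "pN (x N) \<ge> 0" and s: "\<And>n. n \<in> {1..N} \<Longrightarrow> s n > 0"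
  shows "(if q x \<le> 0 then 0 else if chain_dens N pN mu s x \<le> 0 then \<infinity> else ereal (q x * ln (q x / chain_dens N pN mu s x)))
     = Fx N pN q x + ereal (uu N q s x) + ereal (EE N q mu s x)"
proof (cases "q x \<le> 0")
  case True
  then have "q x = 0" using q by simp
  then show ?thesis by (simp add: Fx_def uu_def EE_def)
next
  case qp: False
  show ?thesis
  proof (cases "pN (x N) \<le> 0")
    case True
    then have "chain_dens N pN mu s x = 0" using pN by (simp add: chain_dens_def)
    then show ?thesis using qp True by (simp add: Fx_def)
  next
    case False
    then have p: "pN (x N) > 0" by simp
    note lc = ln_chain[where pN=pN and x=x and N=N and s=s and mu=mu, OF p s]
    have qpos: "q x > 0" using qp by simp
    have "q x * ln (q x / chain_dens N pN mu s x) = q x * (ln (q x) - ln (chain_dens N pN mu s x))"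
      using qpos lc(1) by (simp add: ln_div)
    also have "\<dots> = - q x * ln (pN (x N)) + uu N q s x + EE N q mu s x"
      unfolding uu_def EE_def by (subst lc(2)) (simp, rule lin_id)
    finally show ?thesis using qp p lc(1) by (simp add: Fx_def)
  qed
qed


lemma ennreal_mult_PhiP:
  assumes "r \<ge> 0"
  shows "e2ennreal (if r \<le> 0 then 0 else if p \<le> 0 then \<infinity> else ereal (- r * ln p))
       = ennreal r * (if p \<le> 0 then \<infinity> else ennreal (- ln p))"
proof (cases "r = 0")
  case True then show ?thesis by simp
next
  case False
  then have r: "r > 0" using assms by simp
  show ?thesis
  proof (cases "p \<le> 0")
    case True then show ?thesis using r by (simp add: ennreal_mult_top)
  next
    case False then show ?thesis using r by (simp add: ennreal_mult'[symmetric])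
  qed
qed

lemma ennreal_mult_PhiN:
  assumes "r \<ge> 0"
  shows "e2ennreal (- (if r \<le> 0 then 0 else if p \<le> 0 then \<infinity> else ereal (- r * ln p)))
       = ennreal r * (if p \<le> 0 then 0 else ennreal (ln p))"
proof (cases "r = 0")
  case True then show ?thesis by simp
next
  case False
  then have r: "r > 0" using assms by simp
  show ?thesis
  proof (cases "p \<le> 0")
    case True then show ?thesis using r by (simp add: e2ennreal_neg)
  next
    case False then show ?thesis using r by (simp add: ennreal_mult'[symmetric])
  qed
qed

context qs begin

lemma comp_meas: "n \<le> N \<Longrightarrow> (\<lambda>x. x n) \<in> measurable Om borel"
  unfolding path_space_def
  using measurable_component_singleton[where M="\<lambda>_. lborel :: (real^'d) measure" and i=n and I="{0..N}"] by simp

lemma q_int: "integrable Om q" and q_int1: "(\<integral> x. q x \<partial>Om) = 1"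
proof -
  have "(\<integral>\<^sup>+ x. ennreal (q x) \<partial>Om) \<noteq> \<infinity>" using q_prob by simp
  note h = nn_fin_int[OF q_meas _ this]
  show "integrable Om q" using h(1) q_nonneg by (auto intro!: AE_I2)
  have a: "AE x in Om. 0 \<le> q x" by (rule AE_I2) (rule q_nonneg)
  have "ennreal (\<integral> x. q x \<partial>Om) = 1" using h(2)[OF a] q_prob by simp
  moreover have "(\<integral> x. q x \<partial>Om) \<ge> 0" by (rule integral_nonneg_AE[OF a])
  ultimately show "(\<integral> x. q x \<partial>Om) = 1" by simp
qed

lemma Fx_meas:
  assumes pN: "pN \<in> borel_measurable borel"
  shows "Fx N pN q \<in> borel_measurable Om"
proof -
  note [measurable] = comp_meas[of N, simplified] q_meas pN
  show ?thesis unfolding Fx_def[abs_def] by measurable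
qed

lemma uu_meas: "uu N q s \<in> borel_measurable Om"
  unfolding uu_def[abs_def] using q_meas by measurable

lemma Sn_meas:
  assumes n: "n \<in> {1..N}" and mu: "mu \<in> borel_measurable borel"
  shows "(\<lambda>x. (\<Sum>i\<in>UNIV. (x (n - 1) $ i - mu (x n) $ i)\<^sup>2)) \<in> borel_measurable Om"
proof -
  have m1[measurable]: "(\<lambda>x. x n) \<in> measurable Om borel" by (rule comp_meas) (use n in auto)
  have m2[measurable]: "(\<lambda>x. x (n - 1)) \<in> measurable Om borel" by (rule comp_meas) (use n in auto)
  note [measurable] = mu
  show ?thesis by measurable
qed

lemma EE_meas:
  assumes mu: "\<And>n. n \<in> {1..N} \<Longrightarrow> mu n \<in> borel_measurable borel"
  shows "EE N q mu s \<in> borel_measurable Om"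
proof -
  have "(\<lambda>x. (\<Sum>n\<in>{1..N}. (\<Sum>i\<in>UNIV. (x (n - 1) $ i - mu n (x n) $ i)\<^sup>2) / (2 * s n))) \<in> borel_measurable Om"
    by (intro borel_measurable_sum borel_measurable_divide Sn_meas mu) auto
  then show ?thesis unfolding EE_def[abs_def] using q_meas by (intro borel_measurable_times)
qed

lemma KL_decomp:
  assumes pN: "\<And>y. pN y \<ge> 0" and s: "\<And>n. n \<in> {1..N} \<Longrightarrow> s n > 0"
  shows "KL_dens Om q (chain_dens N pN mu s) = eint Om (\<lambda>x. Fx N pN q x + ereal (uu N q s x) + ereal (EE N q mu s x))"
  unfolding KL_dens_def by (rule eint_cong) (rule KL_point[OF q_nonneg pN s])

lemma cross_transfer:
  assumes pN: "pN \<in> borel_measurable borel" and pN0: "\<And>y. pN y \<ge> 0"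
  shows "eint Om (Fx N pN q) = cross_entropy_dens lborel (marg1 N q N) pN"
proof -
  define PhiP where "PhiP b = (if pN b \<le> 0 then \<infinity> else ennreal (- ln (pN b)))" for b
  define PhiN where "PhiN b = (if pN b \<le> 0 then 0 else ennreal (ln (pN b)))" for b
  have mP: "PhiP \<in> borel_measurable lborel" unfolding PhiP_def[abs_def] using pN by measurable
  have mN: "PhiN \<in> borel_measurable lborel" unfolding PhiN_def[abs_def] using pN by measurable
  have "PP Om (Fx N pN q) = (\<integral>\<^sup>+ x. ennreal (q x) * PhiP (x N) \<partial>Om)"
    unfolding PP_def Fx_def PhiP_def by (rule nn_integral_cong) (rule ennreal_mult_PhiP[OF q_nonneg])
  also have "\<dots> = (\<integral>\<^sup>+ b. Q1 N b * PhiP b \<partial>lborel)" by (rule nn_marg1[OF order_refl mP])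
  also have "\<dots> = (\<integral>\<^sup>+ b. ennreal (marg1 N q N b) * PhiP b \<partial>lborel)"
    by (rule nn_integral_cong_AE) (use Q1_marg1_AE[OF order_refl] in eventually_elim, simp)
  also have "\<dots> = PP lborel (\<lambda>b. if marg1 N q N b \<le> 0 then 0 else if pN b \<le> 0 then \<infinity> else ereal (- marg1 N q N b * ln (pN b)))"
    unfolding PP_def PhiP_def by (rule nn_integral_cong) (rule ennreal_mult_PhiP[OF marg1_nonneg[OF order_refl], symmetric])
  finally have P: "PP Om (Fx N pN q) = PP lborel (\<lambda>b. if marg1 N q N b \<le> 0 then 0 else if pN b \<le> 0 then \<infinity> else ereal (- marg1 N q N b * ln (pN b)))" .
  have "NN Om (Fx N pN q) = (\<integral>\<^sup>+ x. ennreal (q x) * PhiN (x N) \<partial>Om)"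
    unfolding NN_def Fx_def PhiN_def by (rule nn_integral_cong) (rule ennreal_mult_PhiN[OF q_nonneg])
  also have "\<dots> = (\<integral>\<^sup>+ b. Q1 N b * PhiN b \<partial>lborel)" by (rule nn_marg1[OF order_refl mN])
  also have "\<dots> = (\<integral>\<^sup>+ b. ennreal (marg1 N q N b) * PhiN b \<partial>lborel)"
    by (rule nn_integral_cong_AE) (use Q1_marg1_AE[OF order_refl] in eventually_elim, simp)
  also have "\<dots> = NN lborel (\<lambda>b. if marg1 N q N b \<le> 0 then 0 else if pN b \<le> 0 then \<infinity> else ereal (- marg1 N q N b * ln (pN b)))"
    unfolding NN_def PhiN_def by (rule nn_integral_cong) (rule ennreal_mult_PhiN[OF marg1_nonneg[OF order_refl], symmetric])
  finally have N: "NN Om (Fx N pN q) = NN lborel (\<lambda>b. if marg1 N q N b \<le> 0 then 0 else if pN b \<le> 0 then \<infinity> else ereal (- marg1 N q N b * ln (pN b)))" .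
  show ?thesis unfolding eint_PN cross_entropy_dens_def P N ..
qed

end

lemma ln_2pie: "v > 0 \<Longrightarrow> ln (2 * pi * exp 1 * v) = ln (2 * pi * v) + 1"
proof -
  assume v: "v > 0"
  have "2 * pi * exp 1 * v = (2 * pi * v) * exp 1" by simp
  then show ?thesis using v by (simp add: ln_mult_pos)
qed

lemma ereal_shift: "X + ereal (a + b) = X + ereal b - ereal (- a)"
  by (cases X) simp_all

lemma ereal_assoc3: "X + ereal a + ereal b = X + ereal (a + b)"
  by (cases X) simp_all

context qs begin

lemma S_int:
  assumes n: "n \<in> {1..N}"
  shows "integrable Om (\<lambda>x. q x * (\<Sum>i\<in>UNIV. (x (n - 1) $ i - opt_mean N q n (x n) $ i)\<^sup>2))"
    and "(\<integral> x. q x * (\<Sum>i\<in>UNIV. (x (n - 1) $ i - opt_mean N q n (x n) $ i)\<^sup>2) \<partial>Om) = real CARD('d) * opt_var N q n"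
proof -
  have n': "1 \<le> n" "n \<le> N" using n by auto
  have mo: "opt_mean N q n \<in> borel_measurable borel" using opt_mean_meas[OF n'] by simp
  have m: "(\<lambda>x. q x * (\<Sum>i\<in>UNIV. (x (n - 1) $ i - opt_mean N q n (x n) $ i)\<^sup>2)) \<in> borel_measurable Om"
    by (intro borel_measurable_times q_meas Sn_meas[OF n mo])
  have a: "AE x in Om. 0 \<le> q x * (\<Sum>i\<in>UNIV. (x (n - 1) $ i - opt_mean N q n (x n) $ i)\<^sup>2)"
    by (rule AE_I2) (auto intro!: mult_nonneg_nonneg sum_nonneg q_nonneg)
  have f: "(\<integral>\<^sup>+ x. ennreal (q x * (\<Sum>i\<in>UNIV. (x (n - 1) $ i - opt_mean N q n (x n) $ i)\<^sup>2)) \<partial>Om) \<noteq> \<infinity>"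
    unfolding C1_opt[OF n'] by simp
  note h = nn_fin_int[OF m a f]
  show "integrable Om (\<lambda>x. q x * (\<Sum>i\<in>UNIV. (x (n - 1) $ i - opt_mean N q n (x n) $ i)\<^sup>2))" by (rule h(1))
  have "ennreal (\<integral> x. q x * (\<Sum>i\<in>UNIV. (x (n - 1) $ i - opt_mean N q n (x n) $ i)\<^sup>2) \<partial>Om) = ennreal (real CARD('d) * opt_var N q n)"
    using h(2) C1_opt[OF n'] by simp
  moreover have "(\<integral> x. q x * (\<Sum>i\<in>UNIV. (x (n - 1) $ i - opt_mean N q n (x n) $ i)\<^sup>2) \<partial>Om) \<ge> 0"
    by (rule integral_nonneg_AE[OF a])
  moreover have "real CARD('d) * opt_var N q n \<ge> 0" using opt_var_pos[OF n'] by simp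
  ultimately show "(\<integral> x. q x * (\<Sum>i\<in>UNIV. (x (n - 1) $ i - opt_mean N q n (x n) $ i)\<^sup>2) \<partial>Om) = real CARD('d) * opt_var N q n"
    by simp
qed

lemma EE_sum: "EE N q mu s x = (\<Sum>n\<in>{1..N}. q x * (\<Sum>i\<in>UNIV. (x (n - 1) $ i - mu n (x n) $ i)\<^sup>2) / (2 * s n))"
  unfolding EE_def by (simp add: sum_distrib_left)

lemma EE_opt:
  shows "integrable Om (EE N q (opt_mean N q) (opt_var N q))"
    and "(\<integral> x. EE N q (opt_mean N q) (opt_var N q) x \<partial>Om) = (\<Sum>n\<in>{1..N}. real CARD('d) / 2)"
proof -
  have i: "integrable Om (\<lambda>x. q x * (\<Sum>i\<in>UNIV. (x (n - 1) $ i - opt_mean N q n (x n) $ i)\<^sup>2) / (2 * opt_var N q n))"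
    if "n \<in> {1..N}" for n using S_int(1)[OF that] by simp
  show "integrable Om (EE N q (opt_mean N q) (opt_var N q))"
    unfolding EE_sum[abs_def] by (rule Bochner_Integration.integrable_sum) (use i in auto)
  have "(\<integral> x. EE N q (opt_mean N q) (opt_var N q) x \<partial>Om)
      = (\<Sum>n\<in>{1..N}. \<integral> x. q x * (\<Sum>i\<in>UNIV. (x (n - 1) $ i - opt_mean N q n (x n) $ i)\<^sup>2) / (2 * opt_var N q n) \<partial>Om)"
    unfolding EE_sum by (rule Bochner_Integration.integral_sum) (use i in auto)
  also have "\<dots> = (\<Sum>n\<in>{1..N}. real CARD('d) / 2)"
  proof (rule sum.cong[OF refl])
    fix n assume n: "n \<in> {1..N}"
    have "(\<integral> x. q x * (\<Sum>i\<in>UNIV. (x (n - 1) $ i - opt_mean N q n (x n) $ i)\<^sup>2) / (2 * opt_var N q n) \<partial>Om)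
        = (\<integral> x. q x * (\<Sum>i\<in>UNIV. (x (n - 1) $ i - opt_mean N q n (x n) $ i)\<^sup>2) \<partial>Om) / (2 * opt_var N q n)"
      by (rule integral_divide_zero)
    also have "\<dots> = real CARD('d) / 2" unfolding S_int(2)[OF n] using opt_var_pos[of n] n by auto
    finally show "(\<integral> x. q x * (\<Sum>i\<in>UNIV. (x (n - 1) $ i - opt_mean N q n (x n) $ i)\<^sup>2) / (2 * opt_var N q n) \<partial>Om) = real CARD('d) / 2" .
  qed
  finally show "(\<integral> x. EE N q (opt_mean N q) (opt_var N q) x \<partial>Om) = (\<Sum>n\<in>{1..N}. real CARD('d) / 2)" .
qed

lemma uu_int:
  assumes ent: "integrable Om (\<lambda>x. q x * ln (q x))"
  shows "integrable Om (uu N q s)"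
    and "(\<integral> x. uu N q s x \<partial>Om) = (\<integral> x. q x * ln (q x) \<partial>Om) + (\<Sum>n\<in>{1..N}. real CARD('d) / 2 * ln (2 * pi * s n))"
proof -
  have i2: "integrable Om (\<lambda>x. q x * (\<Sum>n\<in>{1..N}. real CARD('d) / 2 * ln (2 * pi * s n)))"
    using q_int by simp
  show "integrable Om (uu N q s)" unfolding uu_def[abs_def] using ent i2 by simp
  show "(\<integral> x. uu N q s x \<partial>Om) = (\<integral> x. q x * ln (q x) \<partial>Om) + (\<Sum>n\<in>{1..N}. real CARD('d) / 2 * ln (2 * pi * s n))"
    unfolding uu_def using ent i2 q_int1 by simp
qed

lemma EE_nn_ge:
  assumes mu: "\<And>n. n \<in> {1..N} \<Longrightarrow> mu n \<in> borel_measurable borel" and s: "\<And>n. n \<in> {1..N} \<Longrightarrow> s n > 0"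
  shows "ennreal (\<Sum>n\<in>{1..N}. real CARD('d) * opt_var N q n / (2 * s n)) \<le> (\<integral>\<^sup>+ x. ennreal (EE N q mu s x) \<partial>Om)"
proof -
  define Sm where "Sm n x = q x * (\<Sum>i\<in>UNIV. (x (n - 1) $ i - mu n (x n) $ i)\<^sup>2) / (2 * s n)" for n x
  have Smm: "(\<lambda>x. ennreal (Sm n x)) \<in> borel_measurable Om" if "n \<in> {1..N}" for n
    unfolding Sm_def using Sn_meas[OF that mu[OF that]] q_meas by measurable
  have Snn: "Sm n x \<ge> 0" if "n \<in> {1..N}" "x \<in> space Om" for n x
    unfolding Sm_def using s[OF that(1)] q_nonneg[OF that(2)] by (auto intro!: divide_nonneg_nonneg mult_nonneg_nonneg sum_nonneg)
  have "(\<integral>\<^sup>+ x. ennreal (EE N q mu s x) \<partial>Om) = (\<integral>\<^sup>+ x. (\<Sum>n\<in>{1..N}. ennreal (Sm n x)) \<partial>Om)"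
  proof (rule nn_integral_cong)
    fix x assume x: "x \<in> space Om"
    have "EE N q mu s x = (\<Sum>n\<in>{1..N}. Sm n x)" unfolding EE_sum Sm_def ..
    then show "ennreal (EE N q mu s x) = (\<Sum>n\<in>{1..N}. ennreal (Sm n x))"
      using sum_ennreal[of "{1..N}" "\<lambda>n. Sm n x"] Snn[OF _ x] by simp
  qed
  also have "\<dots> = (\<Sum>n\<in>{1..N}. \<integral>\<^sup>+ x. ennreal (Sm n x) \<partial>Om)"
    by (rule nn_integral_sum) (use Smm in auto)
  also have "\<dots> \<ge> (\<Sum>n\<in>{1..N}. ennreal (real CARD('d) * opt_var N q n / (2 * s n)))"
  proof (rule sum_mono)
    fix n assume n: "n \<in> {1..N}"
    have n': "1 \<le> n" "n \<le> N" using n by auto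
    have "(\<integral>\<^sup>+ x. ennreal (Sm n x) \<partial>Om) = (\<integral>\<^sup>+ x. ennreal (q x * (\<Sum>i\<in>UNIV. (x (n - 1) $ i - mu n (x n) $ i)\<^sup>2)) * ennreal (1 / (2 * s n)) \<partial>Om)"
      unfolding Sm_def by (rule nn_integral_cong) (simp add: ennreal_mult'[symmetric] q_nonneg sum_nonneg)
    also have "\<dots> = (\<integral>\<^sup>+ x. ennreal (q x * (\<Sum>i\<in>UNIV. (x (n - 1) $ i - mu n (x n) $ i)\<^sup>2)) \<partial>Om) * ennreal (1 / (2 * s n))"
      by (rule nn_integral_multc) (use Sn_meas[OF n mu[OF n]] q_meas in measurable)
    also have "\<dots> \<ge> ennreal (real CARD('d) * opt_var N q n) * ennreal (1 / (2 * s n))"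
      by (rule mult_right_mono[OF C1_ge[OF n' mu[OF n]]]) simp
    finally have "ennreal (real CARD('d) * opt_var N q n) * ennreal (1 / (2 * s n)) \<le> (\<integral>\<^sup>+ x. ennreal (Sm n x) \<partial>Om)" .
    moreover have "ennreal (real CARD('d) * opt_var N q n) * ennreal (1 / (2 * s n)) = ennreal (real CARD('d) * opt_var N q n / (2 * s n))"
      using opt_var_pos[OF n'] s[OF n] by (simp add: ennreal_mult'[symmetric])
    ultimately show "ennreal (real CARD('d) * opt_var N q n / (2 * s n)) \<le> (\<integral>\<^sup>+ x. ennreal (Sm n x) \<partial>Om)" by simp
  qed
  finally show ?thesis
  proof (subst sum_ennreal[symmetric])
    fix n assume n: "n \<in> {1..N}"
    have "opt_var N q n > 0" "s n > 0" using opt_var_pos s[OF n] n by auto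
    then show "0 \<le> real CARD('d) * opt_var N q n / (2 * s n)" by simp
  qed
qed

end

theorem lemma9:
  fixes N :: nat
    and q :: "(nat \<Rightarrow> real^'d) \<Rightarrow> real"
    and pN :: "real^'d \<Rightarrow> real"
  assumes q_meas: "q \<in> borel_measurable (path_space N)"
    and q_nonneg: "\<And>x. x \<in> space (path_space N) \<Longrightarrow> q x \<ge> 0"
    and q_prob: "(\<integral>\<^sup>+ x. ennreal (q x) \<partial>path_space N) = 1"
    and q_moments: "\<And>n. n \<le> N \<Longrightarrow> integrable (path_space N) (\<lambda>x. q x * (norm (x n))\<^sup>2)"
    and q_entropy: "integrable (path_space N) (\<lambda>x. q x * ln (q x))"
    and pN_meas: "pN \<in> borel_measurable lborel"
    and pN_nonneg: "\<And>y. pN y \<ge> 0"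
    and pN_prob: "(\<integral>\<^sup>+ y. ennreal (pN y) \<partial>lborel) = 1"
  shows "(\<forall>n\<in>{1..N}. opt_mean N q n \<in> borel_measurable borel \<and> opt_var N q n > 0)
    \<and> (\<forall>\<mu> s. (\<forall>n\<in>{1..N}. \<mu> n \<in> borel_measurable borel \<and> s n > 0) \<longrightarrow>
          KL_dens (path_space N) q (chain_dens N pN (opt_mean N q) (opt_var N q))
            \<le> KL_dens (path_space N) q (chain_dens N pN \<mu> s))
    \<and> KL_dens (path_space N) q (chain_dens N pN (opt_mean N q) (opt_var N q))
        = cross_entropy_dens lborel (marg1 N q N) pN
          + ereal (real CARD('d) / 2 * (\<Sum>n\<in>{1..N}. ln (2 * pi * exp 1 * opt_var N q n)))
          - ereal (entropy_dens (path_space N) q)"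
proof -
  interpret qs N q
    by unfold_locales (use q_meas q_nonneg q_prob q_moments in auto)
  have pNb: "pN \<in> borel_measurable borel" using pN_meas by simp
  have om: "opt_mean N q n \<in> borel_measurable borel" if "n \<in> {1..N}" for n
    using opt_mean_meas[of n] that by simp
  have ov: "opt_var N q n > 0" if "n \<in> {1..N}" for n
    using opt_var_pos[of n] that by simp
  have P1: "\<forall>n\<in>{1..N}. opt_mean N q n \<in> borel_measurable borel \<and> opt_var N q n > 0"
    using om ov by blast
  define w where "w x = uu N q (opt_var N q) x + EE N q (opt_mean N q) (opt_var N q) x" for x
  have wi: "integrable Om w"
    unfolding w_def[abs_def] using uu_int(1)[OF q_entropy] EE_opt(1) by simp
  have wint: "(\<integral> x. w x \<partial>Om) = (\<integral> x. q x * ln (q x) \<partial>Om)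
      + (\<Sum>n\<in>{1..N}. real CARD('d) / 2 * ln (2 * pi * opt_var N q n)) + (\<Sum>n\<in>{1..N}. real CARD('d) / 2)"
    unfolding w_def using uu_int[OF q_entropy] EE_opt by simp
  have pw: "\<And>x. Fx N pN q x + ereal (uu N q (opt_var N q) x) + ereal (EE N q (opt_mean N q) (opt_var N q) x) = Fx N pN q x + ereal (w x)"
    unfolding w_def by (rule ereal_assoc3)
  have KLs: "KL_dens Om q (chain_dens N pN (opt_mean N q) (opt_var N q)) = eint Om (\<lambda>x. Fx N pN q x + ereal (w x))"
    by (subst KL_decomp[where mu="opt_mean N q", OF pN_nonneg ov]) (simp, simp only: pw)
  also have "\<dots> = eint Om (Fx N pN q) + ereal (\<integral> x. w x \<partial>Om)"
    by (rule eint_add_int[OF Fx_meas[OF pNb] wi])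
  also have "\<dots> = cross_entropy_dens lborel (marg1 N q N) pN + ereal (\<integral> x. w x \<partial>Om)"
    unfolding cross_transfer[OF pNb pN_nonneg] ..
  finally have KLs2: "KL_dens Om q (chain_dens N pN (opt_mean N q) (opt_var N q))
      = cross_entropy_dens lborel (marg1 N q N) pN + ereal (\<integral> x. w x \<partial>Om)" .
  have sum_e: "(\<Sum>n\<in>{1..N}. real CARD('d) / 2 * ln (2 * pi * opt_var N q n)) + (\<Sum>n\<in>{1..N}. real CARD('d) / 2)
      = real CARD('d) / 2 * (\<Sum>n\<in>{1..N}. ln (2 * pi * exp 1 * opt_var N q n))"
  proof -
    have "(\<Sum>n\<in>{1..N}. ln (2 * pi * exp 1 * opt_var N q n)) = (\<Sum>n\<in>{1..N}. ln (2 * pi * opt_var N q n) + 1)"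
      by (rule sum.cong[OF refl]) (rule ln_2pie[OF ov])
    then show ?thesis by (simp add: sum.distrib sum_distrib_left algebra_simps)
  qed
  have P3: "KL_dens Om q (chain_dens N pN (opt_mean N q) (opt_var N q))
        = cross_entropy_dens lborel (marg1 N q N) pN
          + ereal (real CARD('d) / 2 * (\<Sum>n\<in>{1..N}. ln (2 * pi * exp 1 * opt_var N q n)))
          - ereal (entropy_dens Om q)"
  proof -
    have "(\<integral> x. w x \<partial>Om) = (\<integral> x. q x * ln (q x) \<partial>Om) + real CARD('d) / 2 * (\<Sum>n\<in>{1..N}. ln (2 * pi * exp 1 * opt_var N q n))"
      unfolding wint sum_e[symmetric] by simp
    then show ?thesis unfolding KLs2 entropy_dens_def by (simp add: ereal_shift)
  qed
  have P2: "KL_dens Om q (chain_dens N pN (opt_mean N q) (opt_var N q)) \<le> KL_dens Om q (chain_dens N pN \<mu> s)"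
    if h: "\<forall>n\<in>{1..N}. \<mu> n \<in> borel_measurable borel \<and> s n > 0" for \<mu> s
  proof -
    have mu: "\<And>n. n \<in> {1..N} \<Longrightarrow> \<mu> n \<in> borel_measurable borel" and sp: "\<And>n. n \<in> {1..N} \<Longrightarrow> s n > 0"
      using h by auto
    have "KL_dens Om q (chain_dens N pN \<mu> s) = eint Om (\<lambda>x. Fx N pN q x + ereal (uu N q s x) + ereal (EE N q \<mu> s x))"
      by (rule KL_decomp[OF pN_nonneg sp])
    moreover have "eint Om (\<lambda>x. Fx N pN q x + ereal (w x)) \<le> eint Om (\<lambda>x. Fx N pN q x + ereal (uu N q s x) + ereal (EE N q \<mu> s x))"
    proof (rule eint_ge[OF Fx_meas[OF pNb] uu_int(1)[OF q_entropy] wi EE_meas[OF mu]])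
      show "\<And>x. x \<in> space Om \<Longrightarrow> 0 \<le> EE N q \<mu> s x"
      proof -
        fix x assume x: "x \<in> space Om"
        have "\<And>n. n \<in> {1..N} \<Longrightarrow> 0 \<le> (\<Sum>i\<in>UNIV. (x (n - 1) $ i - \<mu> n (x n) $ i)\<^sup>2) / (2 * s n)"
          using sp by (intro divide_nonneg_nonneg sum_nonneg) (auto simp: less_imp_le)
        then show "0 \<le> EE N q \<mu> s x" unfolding EE_def using q_nonneg[OF x] by (intro mult_nonneg_nonneg sum_nonneg) auto
      qed
      have le1: "(\<integral> x. w x \<partial>Om) \<le> (\<integral> x. uu N q s x \<partial>Om) + (\<Sum>n\<in>{1..N}. real CARD('d) * opt_var N q n / (2 * s n))"
      proof -
        have "(\<Sum>n\<in>{1..N}. real CARD('d) / 2 * ln (2 * pi * opt_var N q n) + real CARD('d) / 2)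
            \<le> (\<Sum>n\<in>{1..N}. real CARD('d) / 2 * ln (2 * pi * s n) + real CARD('d) * opt_var N q n / (2 * s n))"
          by (rule sum_mono) (rule scalar_ineq[OF sp ov]; simp)
        then show ?thesis unfolding wint uu_int(2)[OF q_entropy] by (simp add: sum.distrib)
      qed
      have le2: "ereal (\<Sum>n\<in>{1..N}. real CARD('d) * opt_var N q n / (2 * s n)) \<le> enn2ereal (\<integral>\<^sup>+ x. ennreal (EE N q \<mu> s x) \<partial>Om)"
      proof -
        have nn: "0 \<le> (\<Sum>n\<in>{1..N}. real CARD('d) * opt_var N q n / (2 * s n))"
        proof (rule sum_nonneg)
          fix n assume n: "n \<in> {1..N}"
          show "0 \<le> real CARD('d) * opt_var N q n / (2 * s n)"
            by (intro divide_nonneg_nonneg mult_nonneg_nonneg) (use ov[OF n] sp[OF n] in auto)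
        qed
        have "enn2ereal (ennreal (\<Sum>n\<in>{1..N}. real CARD('d) * opt_var N q n / (2 * s n))) \<le> enn2ereal (\<integral>\<^sup>+ x. ennreal (EE N q \<mu> s x) \<partial>Om)"
          using EE_nn_ge[OF mu sp] by (simp add: less_eq_ennreal.rep_eq)
        then show ?thesis using nn by simp
      qed
      have "ereal (\<integral> x. w x \<partial>Om) \<le> ereal (\<integral> x. uu N q s x \<partial>Om) + ereal (\<Sum>n\<in>{1..N}. real CARD('d) * opt_var N q n / (2 * s n))"
        using le1 by simp
      also have "\<dots> \<le> ereal (\<integral> x. uu N q s x \<partial>Om) + enn2ereal (\<integral>\<^sup>+ x. ennreal (EE N q \<mu> s x) \<partial>Om)"
        by (rule add_left_mono[OF le2])
      finally show "ereal (\<integral> x. w x \<partial>Om) \<le> ereal (\<integral> x. uu N q s x \<partial>Om) + enn2ereal (\<integral>\<^sup>+ x. ennreal (EE N q \<mu> s x) \<partial>Om)" .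
    qed
    ultimately show ?thesis using KLs by simp
  qed
  show ?thesis using P1 P2 P3 by blast
qed


end
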